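(* Let $n\in\mathbb{N}$, $\hbar\in{]0,\infty[}$ and $k\in\mathbb{N}_0$. Then the $^*$-ideal $\operatorname{supp}_{\mathbb C}\mathcal{R}_{\hbar,\hbar k}$ of $\mathcal{B}_\hbar$ is the $^*$-ideal of $\mathcal{B}_\hbar$ generated by $\{\mathcal{J}-\hbar k\mathbb{1}\}\cup\mathscr{P}^{k+1,k+1}(\mathbb{C}^{1+n})$.
   Context: $\mathscr{P}^{k,\ell}(\mathbb{C}^{1+n})$ is the span of $z^K\overline{z}^L$ ($K,L\in\mathbb{N}_0^{1+n}$, $|K|=k$, $|L|=\ell$). Wick product: $f\star_\hbar g=\sum_K\frac{\hbar^{|K|}}{K!}\frac{\partial^{|K|}f}{\partial\overline{z}^K}\frac{\partial^{|K|}g}{\partial z^K}$, involution pointwise complex conjugation. $\mathcal{J}=\sum_jz_j\overline{z_j}$. $\mathcal{B}_\hbar=\bigoplus_m\mathscr{P}^{m,m}(\mathbb{C}^{1+n})$ with $\star_\hbar$. Fock space: $\bigoplus_m\mathscr{P}^{m,0}(\mathbb{C}^{1+n})$ with $\langle z^K,z^L\rangle_\hbar=\delta_{K,L}\hbar^{|K|}K!$, $\pi_\hbar(z^K\overline{z}^L)=z^K\hbar^{|L|}\partial^{|L|}/\partial z^L$. Positive cone of $\mathcal{B}_\hbar$: Hermitian $f$ with $\langle g,\pi_\hbar(f)g\rangle_\hbar\ge0$ for all $g$. A state is a linear $\omega$ with $\omega(\mathbb{1})=1$, real on Hermitian, $\ge0$ on the positive cone. $\mathcal{R}_{\hbar,\mu}$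 = Hermitian $f\in\mathcal{B}_\hbar$ with $\omega(f)\ge0$ for all states with $\omega((\mathcal{J}-\mu\mathbb{1})\star_\hbar(\mathcal{J}-\mu\mathbb{1}))=0$. For a quadratic module $Q$, $\operatorname{supp}_{\mathbb C}Q=(Q\cap-Q)+\mathrm{i}(Q\cap-Q)$. *)

theory Defs
  imports Complex_Main
begin

text \<open>Polynomials in z and zbar on C^(1+n), with the index set {0..n} rendered as a
finite type 'i (CARD('i) = 1+n). Multi-indices are functions 'i => nat; a polynomial
is given by its coefficient function on pairs of multi-indices (K,L) (coefficient of
z^K zbar^L), required to have finite support.\<close>

type_synonym 'i mon = "('i \<Rightarrow> nat) \<times> ('i \<Rightarrow> nat)"
type_synonym 'i cpoly = "'i mon \<Rightarrow> complex"
type_synonym 'i fock = "('i \<Rightarrow> nat) \<Rightarrow> complex"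

definition csupp :: "('a \<Rightarrow> complex) \<Rightarrow> 'a set" where
  "csupp f = {m. f m \<noteq> 0}"

definition deg :: "('i::finite \<Rightarrow> nat) \<Rightarrow> nat" where
  "deg K = (\<Sum>j\<in>UNIV. K j)"

definition mfact :: "('i::finite \<Rightarrow> nat) \<Rightarrow> real" where
  "mfact K = (\<Prod>j\<in>UNIV. fact (K j))"

text \<open>Wick product: sum over M of h^|M|/M! (d^M f / d zbar^M)(d^M g / d z^M),
written on coefficients.\<close>
definition wick :: "real \<Rightarrow> 'i::finite cpoly \<Rightarrow> 'i cpoly \<Rightarrow> 'i cpoly" where
  "wick h f g = (\<lambda>(A, B).
     \<Sum>(K, L)\<in>csupp f. \<Sum>(K', L')\<in>csupp g. \<Sum>M\<in>{M. M \<le> L \<and> M \<le> K'}.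
       if (\<lambda>j. K j + K' j - M j) = A \<and> (\<lambda>j. L j - M j + L' j) = B
       then complex_of_real (h ^ deg M / mfact M
              * (mfact L / mfact (\<lambda>j. L j - M j))
              * (mfact K' / mfact (\<lambda>j. K' j - M j))) * f (K, L) * g (K', L')
       else 0)"

text \<open>Involution: pointwise complex conjugation of the function, i.e. on coefficients
the coefficient of z^K zbar^L of f^* is the conjugate of that of z^L zbar^K of f.\<close>
definition cstar :: "'i cpoly \<Rightarrow> 'i cpoly" where
  "cstar f = (\<lambda>(K, L). cnj (f (L, K)))"

definition Balg :: "'i::finite cpoly set" where
  "Balg = {f. finite (csupp f) \<and> (\<forall>(K, L)\<in>csupp f. deg K = deg L)}"

definition one_p :: "'i::finite cpoly" where
  "one_p = (\<lambda>(K, L). if K = (\<lambda>_. 0) \<and> L = (\<lambda>_. 0) then 1 else 0)"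

definition J_p :: "'i::finite cpoly" where
  "J_p = (\<lambda>(K, L). if K = L \<and> deg K = 1 then 1 else 0)"

definition Pkl :: "nat \<Rightarrow> nat \<Rightarrow> 'i::finite cpoly set" where
  "Pkl k l = {f. finite (csupp f) \<and> (\<forall>(K, L)\<in>csupp f. deg K = k \<and> deg L = l)}"

text \<open>Fock space: finitely supported polynomials in z. Inner product
<z^K, z^L> = delta_{K,L} h^|K| K!, antilinear in the first argument.\<close>
definition fock_inner :: "real \<Rightarrow> 'i::finite fock \<Rightarrow> 'i fock \<Rightarrow> complex" where
  "fock_inner h g1 g2 =
     (\<Sum>K\<in>csupp g1 \<inter> csupp g2. cnj (g1 K) * g2 K * complex_of_real (h ^ deg K * mfact K))"

text \<open>pi_h(z^K zbar^L) = z^K h^|L| d^|L|/dz^L.\<close>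
definition pi_rep :: "real \<Rightarrow> 'i::finite cpoly \<Rightarrow> 'i fock \<Rightarrow> 'i fock" where
  "pi_rep h f g = (\<lambda>A.
     \<Sum>(K, L)\<in>csupp f. \<Sum>M\<in>csupp g.
       if L \<le> M \<and> (\<lambda>j. K j + (M j - L j)) = A
       then f (K, L) * g M * complex_of_real (h ^ deg L * (mfact M / mfact (\<lambda>j. M j - L j)))
       else 0)"

definition pos_cone :: "real \<Rightarrow> 'i::finite cpoly set" where
  "pos_cone h = {f \<in> Balg. cstar f = f \<and>
     (\<forall>g. finite (csupp g) \<longrightarrow>
        Im (fock_inner h g (pi_rep h f g)) = 0 \<and> 0 \<le> Re (fock_inner h g (pi_rep h f g)))}"

definition is_state :: "real \<Rightarrow> ('i::finite cpoly \<Rightarrow> complex) \<Rightarrow> bool" where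
  "is_state h \<omega> \<longleftrightarrow>
     (\<forall>f\<in>Balg. \<forall>g\<in>Balg. \<omega> (\<lambda>m. f m + g m) = \<omega> f + \<omega> g) \<and>
     (\<forall>c. \<forall>f\<in>Balg. \<omega> (\<lambda>m. c * f m) = c * \<omega> f) \<and>
     \<omega> one_p = 1 \<and>
     (\<forall>f\<in>Balg. cstar f = f \<longrightarrow> Im (\<omega> f) = 0) \<and>
     (\<forall>f\<in>pos_cone h. Im (\<omega> f) = 0 \<and> 0 \<le> Re (\<omega> f))"

definition Rset :: "real \<Rightarrow> real \<Rightarrow> 'i::finite cpoly set" where
  "Rset h \<mu> = {f \<in> Balg. cstar f = f \<and>
     (\<forall>\<omega>. is_state h \<omega> \<and>
        \<omega> (wick h (\<lambda>m. J_p m - complex_of_real \<mu> * one_p m)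
                   (\<lambda>m. J_p m - complex_of_real \<mu> * one_p m)) = 0
        \<longrightarrow> Im (\<omega> f) = 0 \<and> 0 \<le> Re (\<omega> f))}"

definition supp_C :: "('a \<Rightarrow> complex) set \<Rightarrow> ('a \<Rightarrow> complex) set" where
  "supp_C Q = (let Q0 = Q \<inter> (\<lambda>f m. - f m) ` Q in
     {(\<lambda>m. a m + \<i> * b m) | a b. a \<in> Q0 \<and> b \<in> Q0})"

definition is_star_ideal :: "real \<Rightarrow> 'i::finite cpoly set \<Rightarrow> bool" where
  "is_star_ideal h I \<longleftrightarrow> I \<subseteq> Balg \<and> (\<lambda>_. 0) \<in> I \<and>
     (\<forall>f\<in>I. \<forall>g\<in>I. (\<lambda>m. f m + g m) \<in> I) \<and>
     (\<forall>c. \<forall>f\<in>I. (\<lambda>m. c * f m) \<in> I) \<and>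
     (\<forall>a\<in>Balg. \<forall>f\<in>I. wick h a f \<in> I \<and> wick h f a \<in> I) \<and>
     (\<forall>f\<in>I. cstar f \<in> I)"

definition gen_star_ideal :: "real \<Rightarrow> 'i::finite cpoly set \<Rightarrow> 'i cpoly set" where
  "gen_star_ideal h S = \<Inter>{I. is_star_ideal h I \<and> S \<subseteq> I}"

end

theory Submission
  imports Defs "HOL-Library.FuncSet"
begin

lemma le_fun_iff: "(M::'i \<Rightarrow> nat) \<le> L \<longleftrightarrow> (\<forall>j. M j \<le> L j)"
  by (simp add: le_fun_def)

lemma finite_le_idx: "finite {M::'i::finite \<Rightarrow> nat. M \<le> L}"
proof -
  have "{M::'i \<Rightarrow> nat. M \<le> L} = PiE UNIV (\<lambda>j. {..L j})"
    by (auto simp: le_fun_def PiE_def extensional_def)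
  then show ?thesis by (simp add: finite_PiE)
qed

lemma finite_le_idx2: "finite {M::'i::finite \<Rightarrow> nat. M \<le> L \<and> P M}"
  by (rule finite_subset[OF _ finite_le_idx[of L]]) auto

lemma deg_add: "deg (\<lambda>j. A j + B j) = deg A + deg (B::'i::finite \<Rightarrow> nat)"
  by (simp add: deg_def sum.distrib)

lemma deg_sub: "B \<le> A \<Longrightarrow> deg (\<lambda>j. A j - B j) = deg A - deg (B::'i::finite \<Rightarrow> nat)"
  unfolding deg_def by (rule sum_subtractf_nat) (auto simp: le_fun_def)

lemma deg_mono: "B \<le> A \<Longrightarrow> deg B \<le> deg (A::'i::finite \<Rightarrow> nat)"
  unfolding deg_def by (rule sum_mono) (auto simp: le_fun_def)

lemma deg_zero_iff: "deg (A::'i::finite \<Rightarrow> nat) = 0 \<longleftrightarrow> A = (\<lambda>_. 0)"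
  unfolding deg_def by (auto simp: fun_eq_iff)

lemma deg_le_eq: "B \<le> A \<Longrightarrow> deg B = deg (A::'i::finite \<Rightarrow> nat) \<Longrightarrow> B = A"
proof -
  assume a: "B \<le> A" "deg B = deg A"
  have "deg (\<lambda>j. A j - B j) = 0" using a by (simp add: deg_sub)
  then have "\<forall>j. A j - B j = 0" by (simp add: deg_zero_iff fun_eq_iff)
  with a(1) show "B = A" by (auto simp: le_fun_def fun_eq_iff intro: antisym)
qed

lemma mfact_pos: "mfact (K::'i::finite \<Rightarrow> nat) > 0"
  unfolding mfact_def by (rule prod_pos) auto

lemma mfact_nz: "mfact (K::'i::finite \<Rightarrow> nat) \<noteq> 0"
  using mfact_pos[of K] by simp

definition mono :: "'i mon \<Rightarrow> 'i cpoly" where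
  "mono p = (\<lambda>m. if m = p then 1 else 0)"

definition delta :: "('i \<Rightarrow> nat) \<Rightarrow> 'i fock" where
  "delta N = (\<lambda>A. if A = N then 1 else 0)"

lemma csupp_mono: "csupp (mono p) = {p}"
  by (auto simp: csupp_def mono_def)

lemma csupp_delta: "csupp (delta p) = {p}"
  by (auto simp: csupp_def delta_def)

definition wcoef :: "real \<Rightarrow> ('i::finite \<Rightarrow> nat) \<Rightarrow> ('i \<Rightarrow> nat) \<Rightarrow> ('i \<Rightarrow> nat) \<Rightarrow> real" where
  "wcoef h L K' M = h ^ deg M / mfact M
              * (mfact L / mfact (\<lambda>j. L j - M j))
              * (mfact K' / mfact (\<lambda>j. K' j - M j))"

definition wk :: "real \<Rightarrow> ('i::finite \<Rightarrow> nat) \<Rightarrow> ('i \<Rightarrow> nat) \<Rightarrow> ('i \<Rightarrow> nat) \<Rightarrow> ('i \<Rightarrow> nat)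
   \<Rightarrow> ('i \<Rightarrow> nat) \<Rightarrow> ('i \<Rightarrow> nat) \<Rightarrow> complex" where
  "wk h K L K' L' A B = (\<Sum>M\<in>{M. M \<le> L \<and> M \<le> K'}.
       if (\<lambda>j. K j + K' j - M j) = A \<and> (\<lambda>j. L j - M j + L' j) = B
       then complex_of_real (wcoef h L K' M) else 0)"

lemma wick_csupp:
  "wick h f g (A, B) = (\<Sum>(K, L)\<in>csupp f. \<Sum>(K', L')\<in>csupp g. f (K, L) * g (K', L') * wk h K L K' L' A B)"
  unfolding wick_def wk_def wcoef_def
  by (simp add: sum_distrib_left if_distrib mult_ac cong: if_cong)

lemma wick_eq:
  assumes "finite S" "csupp f \<subseteq> S" "finite T" "csupp g \<subseteq> T"
  shows "wick h f g (A, B) = (\<Sum>(K, L)\<in>S. \<Sum>(K', L')\<in>T. f (K, L) * g (K', L') * wk h K L K' L' A B)"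
proof -
  have "wick h f g (A, B) = (\<Sum>(K, L)\<in>csupp f. \<Sum>(K', L')\<in>T. f (K, L) * g (K', L') * wk h K L K' L' A B)"
    unfolding wick_csupp
  proof (intro sum.cong refl)
    fix x assume "x \<in> csupp f"
    show "(case x of (K, L) \<Rightarrow> \<Sum>(K', L')\<in>csupp g. f (K, L) * g (K', L') * wk h K L K' L' A B) =
          (case x of (K, L) \<Rightarrow> \<Sum>(K', L')\<in>T. f (K, L) * g (K', L') * wk h K L K' L' A B)"
      using assms(3,4) by (cases x) (auto intro!: sum.mono_neutral_left simp: csupp_def)
  qed
  also have "\<dots> = (\<Sum>(K, L)\<in>S. \<Sum>(K', L')\<in>T. f (K, L) * g (K', L') * wk h K L K' L' A B)"
    by (rule sum.mono_neutral_left) (use assms in \<open>auto simp: csupp_def\<close>)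
  finally show ?thesis .
qed

definition pk :: "real \<Rightarrow> ('i::finite \<Rightarrow> nat) \<Rightarrow> ('i \<Rightarrow> nat) \<Rightarrow> ('i \<Rightarrow> nat) \<Rightarrow> ('i \<Rightarrow> nat) \<Rightarrow> complex" where
  "pk h K L M A = (if L \<le> M \<and> (\<lambda>j. K j + (M j - L j)) = A
       then complex_of_real (h ^ deg L * (mfact M / mfact (\<lambda>j. M j - L j))) else 0)"

lemma pi_rep_csupp:
  "pi_rep h f g A = (\<Sum>(K, L)\<in>csupp f. \<Sum>M\<in>csupp g. f (K, L) * g M * pk h K L M A)"
  unfolding pi_rep_def pk_def
  by (simp add: if_distrib cong: if_cong)

lemma pi_rep_eq:
  assumes "finite S" "csupp f \<subseteq> S" "finite T" "csupp g \<subseteq> T"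
  shows "pi_rep h f g A = (\<Sum>(K, L)\<in>S. \<Sum>M\<in>T. f (K, L) * g M * pk h K L M A)"
proof -
  have "pi_rep h f g A = (\<Sum>(K, L)\<in>csupp f. \<Sum>M\<in>T. f (K, L) * g M * pk h K L M A)"
    unfolding pi_rep_csupp
  proof (intro sum.cong refl)
    fix x assume "x \<in> csupp f"
    show "(case x of (K, L) \<Rightarrow> \<Sum>M\<in>csupp g. f (K, L) * g M * pk h K L M A) =
          (case x of (K, L) \<Rightarrow> \<Sum>M\<in>T. f (K, L) * g M * pk h K L M A)"
      using assms(3,4) by (cases x) (auto intro!: sum.mono_neutral_left simp: csupp_def)
  qed
  also have "\<dots> = (\<Sum>(K, L)\<in>S. \<Sum>M\<in>T. f (K, L) * g M * pk h K L M A)"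
    by (rule sum.mono_neutral_left) (use assms in \<open>auto simp: csupp_def\<close>)
  finally show ?thesis .
qed

definition fw :: "real \<Rightarrow> ('i::finite \<Rightarrow> nat) \<Rightarrow> complex" where
  "fw h A = complex_of_real (h ^ deg A * mfact A)"

lemma fock_eq:
  assumes "finite S" "csupp u \<inter> csupp v \<subseteq> S"
  shows "fock_inner h u v = (\<Sum>A\<in>S. cnj (u A) * v A * fw h A)"
  unfolding fock_inner_def fw_def
  by (rule sum.mono_neutral_left) (use assms in \<open>auto simp: csupp_def\<close>)

abbreviation fin :: "('a \<Rightarrow> complex) \<Rightarrow> bool" where "fin f \<equiv> finite (csupp f)"

lemma sum_nz_ex: "sum f S \<noteq> (0::'a::comm_monoid_add) \<Longrightarrow> \<exists>x\<in>S. f x \<noteq> 0"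
  by (meson sum.neutral)

lemma sum_nz_ex2: "(\<Sum>(a,b)\<in>S. F a b) \<noteq> (0::'a::comm_monoid_add) \<Longrightarrow> \<exists>a b. (a,b)\<in>S \<and> F a b \<noteq> 0"
  by (metis (mono_tags, lifting) case_prod_conv surj_pair sum_nz_ex)

lemma csupp_add: "csupp (\<lambda>m. f m + g m) \<subseteq> csupp f \<union> csupp g"
  by (auto simp: csupp_def)
lemma csupp_scale: "csupp (\<lambda>m. c * f m) \<subseteq> csupp f"
  by (auto simp: csupp_def)
lemma fin_add: "fin f \<Longrightarrow> fin g \<Longrightarrow> fin (\<lambda>m. f m + g m)"
  by (rule finite_subset[OF csupp_add]) auto
lemma fin_scale: "fin f \<Longrightarrow> fin (\<lambda>m. c * f m)"
  by (rule finite_subset[OF csupp_scale])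
lemma fin_mono: "fin (mono p)" by (simp add: csupp_mono)
lemma fin_delta: "fin (delta p)" by (simp add: csupp_delta)
lemma fin_zero: "fin (\<lambda>_. 0)" by (simp add: csupp_def)
lemma fin_sum: "finite P \<Longrightarrow> (\<And>p. p \<in> P \<Longrightarrow> fin (F p)) \<Longrightarrow> fin (\<lambda>m. \<Sum>p\<in>P. F p m)"
  by (rule finite_subset[of _ "\<Union>p\<in>P. csupp (F p)"]) (auto simp: csupp_def dest: sum_nz_ex)


definition WS :: "'i::finite cpoly \<Rightarrow> 'i cpoly \<Rightarrow> 'i mon set" where
  "WS f g = (\<Union>(K,L)\<in>csupp f. \<Union>(K',L')\<in>csupp g.
      (\<lambda>M. ((\<lambda>j. K j + K' j - M j), (\<lambda>j. L j - M j + L' j))) ` {M. M \<le> L \<and> M \<le> K'})"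

lemma finite_WS: "fin f \<Longrightarrow> fin g \<Longrightarrow> finite (WS f g)"
  unfolding WS_def by (auto intro!: finite_UN_I finite_le_idx2)

lemma wk_nz: "wk h K L K' L' A B \<noteq> 0 \<Longrightarrow> \<exists>M. M \<le> L \<and> M \<le> K' \<and>
   (\<lambda>j. K j + K' j - M j) = A \<and> (\<lambda>j. L j - M j + L' j) = B"
  unfolding wk_def by (drule sum_nz_ex) (auto split: if_splits)

lemma csupp_wick: "csupp (wick h f g) \<subseteq> WS f g"
proof
  fix x assume "x \<in> csupp (wick h f g)"
  then obtain A B where x: "x = (A,B)" and nz: "wick h f g (A,B) \<noteq> 0"
    by (cases x) (auto simp: csupp_def)
  from nz have "(\<Sum>(K, L)\<in>csupp f. \<Sum>(K', L')\<in>csupp g. f (K, L) * g (K', L') * wk h K L K' L' A B) \<noteq> 0"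
    unfolding wick_csupp .
  from sum_nz_ex2[OF this] obtain K L where p: "(K,L) \<in> csupp f" and "(\<Sum>(K', L')\<in>csupp g. f (K, L) * g (K', L') * wk h K L K' L' A B) \<noteq> 0"
    by blast
  from sum_nz_ex2[OF this(2)] obtain K' L' where q: "(K',L') \<in> csupp g" and "wk h K L K' L' A B \<noteq> 0"
    by auto
  then obtain M where "M \<le> L \<and> M \<le> K' \<and> (\<lambda>j. K j + K' j - M j) = A \<and> (\<lambda>j. L j - M j + L' j) = B"
    by (auto dest!: wk_nz)
  then show "x \<in> WS f g" unfolding WS_def using p q x by blast
qed

lemma fin_wick: "fin f \<Longrightarrow> fin g \<Longrightarrow> fin (wick h f g)"
  by (rule finite_subset[OF csupp_wick finite_WS])

definition PS :: "'i::finite cpoly \<Rightarrow> 'i fock \<Rightarrow> ('i \<Rightarrow> nat) set" where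
  "PS f g = (\<Union>(K,L)\<in>csupp f. \<Union>M\<in>csupp g. {\<lambda>j. K j + (M j - L j)})"

lemma csupp_pi_rep: "csupp (pi_rep h f g) \<subseteq> PS f g"
proof
  fix A assume "A \<in> csupp (pi_rep h f g)"
  then have "pi_rep h f g A \<noteq> 0" by (simp add: csupp_def)
  then obtain K L where p: "(K,L) \<in> csupp f" and "(\<Sum>M\<in>csupp g. f (K, L) * g M * pk h K L M A) \<noteq> 0"
    unfolding pi_rep_csupp by (auto dest!: sum_nz_ex2)
  then obtain M where "M \<in> csupp g" "pk h K L M A \<noteq> 0" by (auto dest!: sum_nz_ex)
  then show "A \<in> PS f g" using p unfolding PS_def pk_def by (auto split: if_splits)
qed

lemma fin_pi_rep: "fin f \<Longrightarrow> fin g \<Longrightarrow> fin (pi_rep h f g)"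
  by (rule finite_subset[OF csupp_pi_rep]) (auto simp: PS_def)

lemma wick_add1:
  assumes "fin f1" "fin f2" "fin g"
  shows "wick h (\<lambda>m. f1 m + f2 m) g = (\<lambda>m. wick h f1 g m + wick h f2 g m)"
proof (rule ext, clarify)
  fix A B
  let ?S = "csupp f1 \<union> csupp f2"
  have f: "finite ?S" using assms by auto
  have s: "csupp (\<lambda>m. f1 m + f2 m) \<subseteq> ?S" "csupp f1 \<subseteq> ?S" "csupp f2 \<subseteq> ?S" by (auto simp: csupp_def)
  show "wick h (\<lambda>m. f1 m + f2 m) g (A, B) = wick h f1 g (A, B) + wick h f2 g (A, B)"
    unfolding wick_eq[OF f s(1) assms(3) order_refl] wick_eq[OF f s(2) assms(3) order_refl]
       wick_eq[OF f s(3) assms(3) order_refl]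
    by (simp add: split_def distrib_right sum.distrib)
qed

lemma wick_add2:
  assumes "fin f" "fin g1" "fin g2"
  shows "wick h f (\<lambda>m. g1 m + g2 m) = (\<lambda>m. wick h f g1 m + wick h f g2 m)"
proof (rule ext, clarify)
  fix A B
  let ?T = "csupp g1 \<union> csupp g2"
  have f: "finite ?T" using assms by auto
  have s: "csupp (\<lambda>m. g1 m + g2 m) \<subseteq> ?T" "csupp g1 \<subseteq> ?T" "csupp g2 \<subseteq> ?T" by (auto simp: csupp_def)
  show "wick h f (\<lambda>m. g1 m + g2 m) (A, B) = wick h f g1 (A, B) + wick h f g2 (A, B)"
    unfolding wick_eq[OF assms(1) order_refl f s(1)] wick_eq[OF assms(1) order_refl f s(2)]
       wick_eq[OF assms(1) order_refl f s(3)]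
    by (simp add: split_def distrib_right distrib_left sum.distrib)
qed

lemma wick_scale1:
  assumes "fin f" "fin g"
  shows "wick h (\<lambda>m. c * f m) g = (\<lambda>m. c * wick h f g m)"
proof (rule ext, clarify)
  fix A B
  show "wick h (\<lambda>m. c * f m) g (A, B) = c * wick h f g (A, B)"
    unfolding wick_eq[OF assms(1) csupp_scale assms(2) order_refl] wick_eq[OF assms(1) order_refl assms(2) order_refl]
    by (simp add: split_def sum_distrib_left mult_ac)
qed

lemma wick_scale2:
  assumes "fin f" "fin g"
  shows "wick h f (\<lambda>m. c * g m) = (\<lambda>m. c * wick h f g m)"
proof (rule ext, clarify)
  fix A B
  show "wick h f (\<lambda>m. c * g m) (A, B) = c * wick h f g (A, B)"
    unfolding wick_eq[OF assms(1) order_refl assms(2) csupp_scale] wick_eq[OF assms(1) order_refl assms(2) order_refl]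
    by (simp add: split_def sum_distrib_left mult_ac)
qed

lemma pi_add1:
  assumes "fin f1" "fin f2" "fin g"
  shows "pi_rep h (\<lambda>m. f1 m + f2 m) g = (\<lambda>m. pi_rep h f1 g m + pi_rep h f2 g m)"
proof (rule ext)
  fix A
  let ?S = "csupp f1 \<union> csupp f2"
  have f: "finite ?S" using assms by auto
  have s: "csupp (\<lambda>m. f1 m + f2 m) \<subseteq> ?S" "csupp f1 \<subseteq> ?S" "csupp f2 \<subseteq> ?S" by (auto simp: csupp_def)
  show "pi_rep h (\<lambda>m. f1 m + f2 m) g A = pi_rep h f1 g A + pi_rep h f2 g A"
    unfolding pi_rep_eq[OF f s(1) assms(3) order_refl] pi_rep_eq[OF f s(2) assms(3) order_refl]
       pi_rep_eq[OF f s(3) assms(3) order_refl]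
    by (simp add: split_def distrib_right sum.distrib)
qed

lemma pi_add2:
  assumes "fin f" "fin g1" "fin g2"
  shows "pi_rep h f (\<lambda>m. g1 m + g2 m) = (\<lambda>m. pi_rep h f g1 m + pi_rep h f g2 m)"
proof (rule ext)
  fix A
  let ?T = "csupp g1 \<union> csupp g2"
  have f: "finite ?T" using assms by auto
  have s: "csupp (\<lambda>m. g1 m + g2 m) \<subseteq> ?T" "csupp g1 \<subseteq> ?T" "csupp g2 \<subseteq> ?T" by (auto simp: csupp_def)
  show "pi_rep h f (\<lambda>m. g1 m + g2 m) A = pi_rep h f g1 A + pi_rep h f g2 A"
    unfolding pi_rep_eq[OF assms(1) order_refl f s(1)] pi_rep_eq[OF assms(1) order_refl f s(2)]
       pi_rep_eq[OF assms(1) order_refl f s(3)]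
    by (simp add: split_def distrib_right distrib_left sum.distrib)
qed

lemma pi_scale1:
  assumes "fin f" "fin g"
  shows "pi_rep h (\<lambda>m. c * f m) g = (\<lambda>m. c * pi_rep h f g m)"
proof (rule ext)
  fix A
  show "pi_rep h (\<lambda>m. c * f m) g A = c * pi_rep h f g A"
    unfolding pi_rep_eq[OF assms(1) csupp_scale assms(2) order_refl] pi_rep_eq[OF assms(1) order_refl assms(2) order_refl]
    by (simp add: split_def sum_distrib_left mult_ac)
qed

lemma pi_scale2:
  assumes "fin f" "fin g"
  shows "pi_rep h f (\<lambda>m. c * g m) = (\<lambda>m. c * pi_rep h f g m)"
proof (rule ext)
  fix A
  show "pi_rep h f (\<lambda>m. c * g m) A = c * pi_rep h f g A"
    unfolding pi_rep_eq[OF assms(1) order_refl assms(2) csupp_scale] pi_rep_eq[OF assms(1) order_refl assms(2) order_refl]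
    by (simp add: split_def sum_distrib_left mult_ac)
qed

lemma fock_add2:
  assumes "fin u" "fin v1" "fin v2"
  shows "fock_inner h u (\<lambda>m. v1 m + v2 m) = fock_inner h u v1 + fock_inner h u v2"
  unfolding fock_eq[OF assms(1) Int_lower1] 
  by (simp add: distrib_left distrib_right sum.distrib)

lemma fock_add1:
  assumes "fin u1" "fin u2" "fin v"
  shows "fock_inner h (\<lambda>m. u1 m + u2 m) v = fock_inner h u1 v + fock_inner h u2 v"
  unfolding fock_eq[OF assms(3) Int_lower2] 
  by (simp add: distrib_left distrib_right sum.distrib)

lemma fock_scale2:
  assumes "fin u"
  shows "fock_inner h u (\<lambda>m. c * v m) = c * fock_inner h u v"
  unfolding fock_eq[OF assms(1) Int_lower1] 
  by (simp add: sum_distrib_left mult_ac)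

lemma fock_scale1:
  assumes "fin v"
  shows "fock_inner h (\<lambda>m. c * u m) v = cnj c * fock_inner h u v"
  unfolding fock_eq[OF assms(1) Int_lower2] 
  by (simp add: sum_distrib_left mult_ac)

lemma fock_cnj: "fock_inner h v u = cnj (fock_inner h u v)"
  unfolding fock_inner_def fw_def by (simp add: Int_commute mult_ac)

lemma fock_self: "Im (fock_inner h u u) = 0 \<and> (0 < h \<longrightarrow> 0 \<le> Re (fock_inner h u u))"
proof -
  have "fock_inner h u u = (\<Sum>A\<in>csupp u. complex_of_real (cmod (u A) ^ 2 * (h ^ deg A * mfact A)))"
    unfolding fock_inner_def
    proof (intro sum.cong)
    fix x show "cnj (u x) * u x * complex_of_real (h ^ deg x * mfact x) =
         complex_of_real ((cmod (u x))\<^sup>2 * (h ^ deg x * mfact x))"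
      by (simp only: of_real_mult complex_norm_square mult_ac)
  qed simp
  then show ?thesis
    by (auto intro!: sum_nonneg mult_nonneg_nonneg simp: Re_sum Im_sum mfact_pos less_imp_le)
qed

lemma vdm1:
  fixes h :: real
  assumes "l' \<le> n" "l \<le> a + (n - l')"
  shows "(\<Sum>m\<in>{m. m \<le> l \<and> m \<le> a \<and> l - m \<le> n - l'}. h^m / fact m * (fact l / fact (l - m)) * (fact a / fact (a - m))
           * (h^(l - m + l') * (fact n / fact (n - (l - m + l'))))) =
         h^l' * (fact n / fact (n - l')) * (h^l * (fact (a + (n - l')) / fact (a + (n - l') - l)))"
proof -
  define p where "p = n - l'"
  have tm: "h^m / fact m * (fact l / fact (l - m)) * (fact a / fact (a - m))
           * (h^(l - m + l') * (fact n / fact (n - (l - m + l')))) =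
        h^(l+l') * (fact n / fact p) * fact l * (real (a choose m) * real (p choose (l - m)))"
    if m: "m \<le> l" "m \<le> a" "l - m \<le> p" for m
  proof -
    have e1: "n - (l - m + l') = p - (l - m)" using m assms unfolding p_def by simp
    have e2: "h^m * h^(l - m + l') = h^(l+l')" using m by (simp add: power_add[symmetric])
    show ?thesis
      unfolding e1 binomial_fact[OF m(2)] binomial_fact[OF m(3)]
      using e2 by (simp add: field_simps)
  qed
  have "(\<Sum>m\<in>{m. m \<le> l \<and> m \<le> a \<and> l - m \<le> n - l'}. h^m / fact m * (fact l / fact (l - m)) * (fact a / fact (a - m))
           * (h^(l - m + l') * (fact n / fact (n - (l - m + l'))))) =
        (\<Sum>m\<in>{m. m \<le> l \<and> m \<le> a \<and> l - m \<le> p}. h^(l+l') * (fact n / fact p) * fact l * (real (a choose m) * real (p choose (l - m))))"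
    unfolding p_def[symmetric] by (intro sum.cong refl) (rule tm; simp)
  also have "\<dots> = (\<Sum>m\<le>l. h^(l+l') * (fact n / fact p) * fact l * (real (a choose m) * real (p choose (l - m))))"
    by (rule sum.mono_neutral_left) auto
  also have "\<dots> = h^(l+l') * (fact n / fact p) * fact l * real (\<Sum>m\<le>l. (a choose m) * (p choose (l - m)))"
    by (simp add: sum_distrib_left)
  also have "\<dots> = h^(l+l') * (fact n / fact p) * (fact l * real ((a + p) choose l))"
    by (simp add: vandermonde)
  also have "\<dots> = h^(l+l') * (fact n / fact p) * (fact (a + p) / fact (a + p - l))"
    using assms by (subst fact_binomial) (auto simp: p_def)
  finally show ?thesis by (simp add: p_def power_add)
qed

lemma wk_pk_sum:
  fixes K L K' L' N A :: "'i::finite \<Rightarrow> nat"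
  shows "(\<Sum>M\<in>{M. M \<le> L \<and> M \<le> K'}. complex_of_real (wcoef h L K' M) * pk h (\<lambda>j. K j + K' j - M j) (\<lambda>j. L j - M j + L' j) N A) =
   (if L' \<le> N then complex_of_real (h ^ deg L' * (mfact N / mfact (\<lambda>j. N j - L' j))) * pk h K L (\<lambda>j. K' j + (N j - L' j)) A else 0)"
proof (cases "L' \<le> N")
  case False
  have "\<not> (\<lambda>j. L j - M j + L' j) \<le> N" for M
    using False unfolding le_fun_def by (metis le_add2 le_trans add.commute)
  then show ?thesis using False by (auto simp: pk_def intro!: sum.neutral)
next
  case LN: True
  define P where "P = (\<lambda>j. N j - L' j)"
  define T where "T = (\<lambda>j. K j + (K' j + P j - L j))"
  have cond: "((\<lambda>j. L j - M j + L' j) \<le> N \<and> (\<lambda>j. K j + K' j - M j + (N j - (L j - M j + L' j))) = A)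
     \<longleftrightarrow> (\<forall>j. L j - M j \<le> P j) \<and> T = A" if M: "M \<le> L" "M \<le> K'" for M
  proof -
    have "(\<lambda>j. L j - M j + L' j) \<le> N \<longleftrightarrow> (\<forall>j. L j - M j \<le> P j)"
    proof -
      have "L j - M j + L' j \<le> N j \<longleftrightarrow> L j - M j \<le> N j - L' j" for j
        using LN unfolding le_fun_def by (metis le_diff_conv2)
      then show ?thesis unfolding le_fun_def P_def by auto
    qed
    moreover have "(\<forall>j. L j - M j \<le> P j) \<Longrightarrow> (\<lambda>j. K j + K' j - M j + (N j - (L j - M j + L' j))) = T"
    proof -
      assume a: "\<forall>j. L j - M j \<le> P j"
      show ?thesis
      proof (rule ext)
        fix x
        have "L x - M x \<le> N x - L' x" "L' x \<le> N x" "M x \<le> L x" "M x \<le> K' x"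
          using a LN M by (auto simp: le_fun_def P_def)
        then show "K x + K' x - M x + (N x - (L x - M x + L' x)) = T x"
          unfolding T_def P_def by linarith
      qed
    qed
    ultimately show ?thesis by auto
  qed
  define t where "t = (\<lambda>j m. h^m / fact m * (fact (L j) / fact (L j - m)) * (fact (K' j) / fact (K' j - m))
           * (h^(L j - m + L' j) * (fact (N j) / fact (N j - (L j - m + L' j)))))"
  have tprod: "wcoef h L K' M * (h ^ deg (\<lambda>j. L j - M j + L' j) * (mfact N / mfact (\<lambda>j. N j - (L j - M j + L' j))))
      = (\<Prod>j\<in>UNIV. t j (M j))" for M
    unfolding t_def wcoef_def deg_def mfact_def
    by (simp add: prod.distrib prod_dividef power_sum)
  show ?thesis
  proof (cases "L \<le> (\<lambda>j. K' j + P j) \<and> T = A")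
    case False
    have "pk h (\<lambda>j. K j + K' j - M j) (\<lambda>j. L j - M j + L' j) N A = 0" if M: "M \<le> L" "M \<le> K'" for M
    proof -
      have "\<not> ((\<forall>j. L j - M j \<le> P j) \<and> T = A)"
        using False M unfolding le_fun_def
        by (metis add.commute le_diff_conv le_trans add_le_mono1 diff_le_mono2 add_le_cancel_left)
      then show ?thesis using cond[OF M] unfolding pk_def by auto
    qed
    moreover have "pk h K L (\<lambda>j. K' j + (N j - L' j)) A = 0"
      using False unfolding pk_def P_def T_def by auto
    ultimately show ?thesis by (auto intro!: sum.neutral)
  next
    case True
    let ?S = "{M. M \<le> L \<and> M \<le> K' \<and> (\<forall>j. L j - M j \<le> P j)}"
    have "(\<Sum>M\<in>{M. M \<le> L \<and> M \<le> K'}. complex_of_real (wcoef h L K' M) * pk h (\<lambda>j. K j + K' j - M j) (\<lambda>j. L j - M j + L' j) N A)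
       = (\<Sum>M\<in>?S. complex_of_real (wcoef h L K' M) * pk h (\<lambda>j. K j + K' j - M j) (\<lambda>j. L j - M j + L' j) N A)"
    proof (rule sum.mono_neutral_right)
      show "finite {M. M \<le> L \<and> M \<le> K'}" by (rule finite_le_idx2)
      show "\<forall>M\<in>{M. M \<le> L \<and> M \<le> K'} - ?S. complex_of_real (wcoef h L K' M) * pk h (\<lambda>j. K j + K' j - M j) (\<lambda>j. L j - M j + L' j) N A = 0"
        using cond unfolding pk_def by auto
    qed auto
    also have "\<dots> = (\<Sum>M\<in>?S. complex_of_real (\<Prod>j\<in>UNIV. t j (M j)))"
    proof (intro sum.cong refl)
      fix M assume M: "M \<in> ?S"
      then have "pk h (\<lambda>j. K j + K' j - M j) (\<lambda>j. L j - M j + L' j) N A =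
          complex_of_real (h ^ deg (\<lambda>j. L j - M j + L' j) * (mfact N / mfact (\<lambda>j. N j - (L j - M j + L' j))))"
        using cond[of M] True unfolding pk_def by auto
      then show "complex_of_real (wcoef h L K' M) * pk h (\<lambda>j. K j + K' j - M j) (\<lambda>j. L j - M j + L' j) N A =
          complex_of_real (\<Prod>j\<in>UNIV. t j (M j))"
        by (simp add: tprod[symmetric])
    qed
    also have "?S = PiE UNIV (\<lambda>j. {m. m \<le> L j \<and> m \<le> K' j \<and> L j - m \<le> N j - L' j})"
      by (auto simp: le_fun_def PiE_def extensional_def P_def)
    also have "(\<Sum>M\<in>PiE UNIV (\<lambda>j. {m. m \<le> L j \<and> m \<le> K' j \<and> L j - m \<le> N j - L' j}). complex_of_real (\<Prod>j\<in>UNIV. t j (M j)))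
        = complex_of_real (\<Prod>j\<in>UNIV. \<Sum>m\<in>{m. m \<le> L j \<and> m \<le> K' j \<and> L j - m \<le> N j - L' j}. t j m)"
      by (subst prod_sum_PiE) auto
    also have "(\<Prod>j\<in>UNIV. \<Sum>m\<in>{m. m \<le> L j \<and> m \<le> K' j \<and> L j - m \<le> N j - L' j}. t j m)
       = (\<Prod>j\<in>UNIV. h^(L' j) * (fact (N j) / fact (N j - L' j)) * (h^(L j) * (fact (K' j + (N j - L' j)) / fact (K' j + (N j - L' j) - L j))))"
    proof (intro prod.cong refl)
      fix j
      have "L' j \<le> N j" "L j \<le> K' j + (N j - L' j)" using LN True by (auto simp: le_fun_def P_def)
      then show "(\<Sum>m\<in>{m. m \<le> L j \<and> m \<le> K' j \<and> L j - m \<le> N j - L' j}. t j m) =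
        h^(L' j) * (fact (N j) / fact (N j - L' j)) * (h^(L j) * (fact (K' j + (N j - L' j)) / fact (K' j + (N j - L' j) - L j)))"
        unfolding t_def by (rule vdm1)
    qed
    also have "\<dots> = h ^ deg L' * (mfact N / mfact (\<lambda>j. N j - L' j)) * (h ^ deg L * (mfact (\<lambda>j. K' j + (N j - L' j)) / mfact (\<lambda>j. K' j + (N j - L' j) - L j)))"
      unfolding deg_def mfact_def by (simp add: prod.distrib prod_dividef power_sum)
    finally show ?thesis
      using True LN unfolding pk_def P_def T_def by simp
  qed
qed

lemma sum_swap4: "(\<Sum>a\<in>A. \<Sum>b\<in>B. \<Sum>c\<in>C. \<Sum>d\<in>D. X a b c d) = (\<Sum>c\<in>C. \<Sum>d\<in>D. \<Sum>b\<in>B. \<Sum>a\<in>A. X a b c d)"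
proof -
  have "(\<Sum>a\<in>A. \<Sum>b\<in>B. \<Sum>c\<in>C. \<Sum>d\<in>D. X a b c d) = (\<Sum>a\<in>A. \<Sum>c\<in>C. \<Sum>d\<in>D. \<Sum>b\<in>B. X a b c d)"
  proof (intro sum.cong refl)
    fix a
    have "(\<Sum>b\<in>B. \<Sum>c\<in>C. \<Sum>d\<in>D. X a b c d) = (\<Sum>c\<in>C. \<Sum>b\<in>B. \<Sum>d\<in>D. X a b c d)" by (rule sum.swap)
    also have "\<dots> = (\<Sum>c\<in>C. \<Sum>d\<in>D. \<Sum>b\<in>B. X a b c d)" by (intro sum.cong refl) (rule sum.swap)
    finally show "(\<Sum>b\<in>B. \<Sum>c\<in>C. \<Sum>d\<in>D. X a b c d) = (\<Sum>c\<in>C. \<Sum>d\<in>D. \<Sum>b\<in>B. X a b c d)" .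
  qed
  also have "\<dots> = (\<Sum>c\<in>C. \<Sum>a\<in>A. \<Sum>d\<in>D. \<Sum>b\<in>B. X a b c d)" by (rule sum.swap)
  also have "\<dots> = (\<Sum>c\<in>C. \<Sum>d\<in>D. \<Sum>a\<in>A. \<Sum>b\<in>B. X a b c d)" by (intro sum.cong refl) (rule sum.swap)
  also have "\<dots> = (\<Sum>c\<in>C. \<Sum>d\<in>D. \<Sum>b\<in>B. \<Sum>a\<in>A. X a b c d)" by (intro sum.cong refl) (rule sum.swap)
  finally show ?thesis .
qed

lemma sum_swap3: "(\<Sum>a\<in>A. \<Sum>b\<in>B. \<Sum>c\<in>C. X a b c) = (\<Sum>b\<in>B. \<Sum>c\<in>C. \<Sum>a\<in>A. X a b c)"
proof -
  have "(\<Sum>a\<in>A. \<Sum>b\<in>B. \<Sum>c\<in>C. X a b c) = (\<Sum>b\<in>B. \<Sum>a\<in>A. \<Sum>c\<in>C. X a b c)" by (rule sum.swap)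
  also have "\<dots> = (\<Sum>b\<in>B. \<Sum>c\<in>C. \<Sum>a\<in>A. X a b c)" by (intro sum.cong refl) (rule sum.swap)
  finally show ?thesis .
qed

lemma collapse_w:
  assumes "fin f" "fin g" "(K,L) \<in> csupp f" "(K',L') \<in> csupp g"
  shows "(\<Sum>r\<in>WS f g. wk h K L K' L' (fst r) (snd r) * pk h (fst r) (snd r) N A) =
    (\<Sum>M\<in>{M. M \<le> L \<and> M \<le> K'}. complex_of_real (wcoef h L K' M) * pk h (\<lambda>j. K j + K' j - M j) (\<lambda>j. L j - M j + L' j) N A)"
proof -
  have "(\<Sum>r\<in>WS f g. wk h K L K' L' (fst r) (snd r) * pk h (fst r) (snd r) N A) =
    (\<Sum>r\<in>WS f g. \<Sum>M\<in>{M. M \<le> L \<and> M \<le> K'}. if r = ((\<lambda>j. K j + K' j - M j), (\<lambda>j. L j - M j + L' j))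
       then complex_of_real (wcoef h L K' M) * pk h (fst r) (snd r) N A else 0)"
    unfolding wk_def sum_distrib_right
    by (intro sum.cong refl) (auto simp: prod_eq_iff)
  also have "\<dots> = (\<Sum>M\<in>{M. M \<le> L \<and> M \<le> K'}. \<Sum>r\<in>WS f g. if r = ((\<lambda>j. K j + K' j - M j), (\<lambda>j. L j - M j + L' j))
       then complex_of_real (wcoef h L K' M) * pk h (fst r) (snd r) N A else 0)"
    by (rule sum.swap)
  also have "\<dots> = (\<Sum>M\<in>{M. M \<le> L \<and> M \<le> K'}. complex_of_real (wcoef h L K' M) * pk h (\<lambda>j. K j + K' j - M j) (\<lambda>j. L j - M j + L' j) N A)"
  proof (intro sum.cong refl)
    fix M assume M: "M \<in> {M. M \<le> L \<and> M \<le> K'}"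
    have "((\<lambda>j. K j + K' j - M j), (\<lambda>j. L j - M j + L' j)) \<in> WS f g"
      unfolding WS_def using assms(3,4) M by blast
    then show "(\<Sum>r\<in>WS f g. if r = ((\<lambda>j. K j + K' j - M j), (\<lambda>j. L j - M j + L' j))
       then complex_of_real (wcoef h L K' M) * pk h (fst r) (snd r) N A else 0) =
       complex_of_real (wcoef h L K' M) * pk h (\<lambda>j. K j + K' j - M j) (\<lambda>j. L j - M j + L' j) N A"
      using finite_WS[OF assms(1,2)] by (subst sum.delta) auto
  qed
  finally show ?thesis .
qed

lemma collapse_p:
  assumes "fin g" "fin v" "(K',L') \<in> csupp g" "N \<in> csupp v"
  shows "(\<Sum>N'\<in>PS g v. pk h K' L' N N' * pk h K L N' A) =
    (if L' \<le> N then complex_of_real (h ^ deg L' * (mfact N / mfact (\<lambda>j. N j - L' j))) * pk h K L (\<lambda>j. K' j + (N j - L' j)) A else 0)"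
proof -
  have mem: "(\<lambda>j. K' j + (N j - L' j)) \<in> PS g v" unfolding PS_def using assms(3,4) by blast
  have fin: "finite (PS g v)" using assms(1,2) by (auto simp: PS_def)
  have "(\<Sum>N'\<in>PS g v. pk h K' L' N N' * pk h K L N' A) =
     (\<Sum>N'\<in>PS g v. if N' = (\<lambda>j. K' j + (N j - L' j)) then
        (if L' \<le> N then complex_of_real (h ^ deg L' * (mfact N / mfact (\<lambda>j. N j - L' j))) * pk h K L N' A else 0) else 0)"
    unfolding pk_def[of h K' L'] by (intro sum.cong refl) auto
  then show ?thesis using mem fin by (subst (asm) sum.delta) auto
qed

lemma pi_wick:
  assumes f: "fin f" and g: "fin g" and v: "fin v"
  shows "pi_rep h (wick h f g) v = pi_rep h f (pi_rep h g v)"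
proof (rule ext)
  fix A
  let ?W = "WS f g" and ?F = "csupp f" and ?G = "csupp g" and ?V = "csupp v"
  let ?X = "\<lambda>p q N. f p * g q * v N"
  have "pi_rep h (wick h f g) v A = (\<Sum>r\<in>?W. \<Sum>N\<in>?V. wick h f g r * v N * pk h (fst r) (snd r) N A)"
    using pi_rep_eq[OF finite_WS[OF f g] csupp_wick v order_refl] by (simp add: split_def)
  also have "\<dots> = (\<Sum>r\<in>?W. \<Sum>N\<in>?V. \<Sum>p\<in>?F. \<Sum>q\<in>?G. ?X p q N * (wk h (fst p) (snd p) (fst q) (snd q) (fst r) (snd r) * pk h (fst r) (snd r) N A))"
  proof (intro sum.cong refl)
    fix r N
    show "wick h f g r * v N * pk h (fst r) (snd r) N A = (\<Sum>p\<in>?F. \<Sum>q\<in>?G. ?X p q N * (wk h (fst p) (snd p) (fst q) (snd q) (fst r) (snd r) * pk h (fst r) (snd r) N A))"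
      using wick_eq[OF f order_refl g order_refl, of h "fst r" "snd r"]
      by (simp add: split_def sum_distrib_left sum_distrib_right mult_ac)
  qed
  also have "\<dots> = (\<Sum>p\<in>?F. \<Sum>q\<in>?G. \<Sum>N\<in>?V. \<Sum>r\<in>?W. ?X p q N * (wk h (fst p) (snd p) (fst q) (snd q) (fst r) (snd r) * pk h (fst r) (snd r) N A))"
    by (rule sum_swap4)
  also have "\<dots> = (\<Sum>p\<in>?F. \<Sum>q\<in>?G. \<Sum>N\<in>?V. ?X p q N *
      (\<Sum>M\<in>{M. M \<le> snd p \<and> M \<le> fst q}. complex_of_real (wcoef h (snd p) (fst q) M) * pk h (\<lambda>j. fst p j + fst q j - M j) (\<lambda>j. snd p j - M j + snd q j) N A))"
  proof (intro sum.cong refl)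
    fix p q N assume p: "p \<in> ?F" and q: "q \<in> ?G"
    show "(\<Sum>r\<in>?W. ?X p q N * (wk h (fst p) (snd p) (fst q) (snd q) (fst r) (snd r) * pk h (fst r) (snd r) N A)) = ?X p q N *
      (\<Sum>M\<in>{M. M \<le> snd p \<and> M \<le> fst q}. complex_of_real (wcoef h (snd p) (fst q) M) * pk h (\<lambda>j. fst p j + fst q j - M j) (\<lambda>j. snd p j - M j + snd q j) N A)"
      using collapse_w[OF f g, of "fst p" "snd p" "fst q" "snd q" h N A] p q
      by (simp add: sum_distrib_left[symmetric])
  qed
  also have "\<dots> = (\<Sum>p\<in>?F. \<Sum>q\<in>?G. \<Sum>N\<in>?V. ?X p q N *
      (if snd q \<le> N then complex_of_real (h ^ deg (snd q) * (mfact N / mfact (\<lambda>j. N j - snd q j))) * pk h (fst p) (snd p) (\<lambda>j. fst q j + (N j - snd q j)) A else 0))"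
    by (simp only: wk_pk_sum)
  also have "\<dots> = (\<Sum>p\<in>?F. \<Sum>q\<in>?G. \<Sum>N\<in>?V. \<Sum>N'\<in>PS g v. ?X p q N * (pk h (fst q) (snd q) N N' * pk h (fst p) (snd p) N' A))"
  proof (intro sum.cong refl)
    fix p q N assume q: "q \<in> ?G" and N: "N \<in> ?V"
    show "?X p q N *
      (if snd q \<le> N then complex_of_real (h ^ deg (snd q) * (mfact N / mfact (\<lambda>j. N j - snd q j))) * pk h (fst p) (snd p) (\<lambda>j. fst q j + (N j - snd q j)) A else 0)
      = (\<Sum>N'\<in>PS g v. ?X p q N * (pk h (fst q) (snd q) N N' * pk h (fst p) (snd p) N' A))"
      using collapse_p[OF g v, of "fst q" "snd q" N h "fst p" "snd p" A] q N
      by (simp add: sum_distrib_left[symmetric])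
  qed
  also have "\<dots> = (\<Sum>p\<in>?F. \<Sum>N'\<in>PS g v. \<Sum>q\<in>?G. \<Sum>N\<in>?V. ?X p q N * (pk h (fst q) (snd q) N N' * pk h (fst p) (snd p) N' A))"
    by (intro sum.cong refl) (rule sum_swap3[symmetric])
  also have "\<dots> = (\<Sum>p\<in>?F. \<Sum>N'\<in>PS g v. f p * pi_rep h g v N' * pk h (fst p) (snd p) N' A)"
  proof (intro sum.cong refl)
    fix p N'
    show "(\<Sum>q\<in>?G. \<Sum>N\<in>?V. ?X p q N * (pk h (fst q) (snd q) N N' * pk h (fst p) (snd p) N' A)) = f p * pi_rep h g v N' * pk h (fst p) (snd p) N' A"
      using pi_rep_eq[OF g order_refl v order_refl, of h N']
      by (simp add: split_def sum_distrib_left sum_distrib_right mult_ac)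
  qed
  also have "\<dots> = pi_rep h f (pi_rep h g v) A"
  proof -
    have finPS: "finite (PS g v)" using g v by (auto simp: PS_def)
    show ?thesis using pi_rep_eq[OF f order_refl finPS csupp_pi_rep[of h g v], of h A] by (simp add: split_def)
  qed
  finally show "pi_rep h (wick h f g) v A = pi_rep h f (pi_rep h g v) A" .
qed

definition swp :: "'a \<times> 'b \<Rightarrow> 'b \<times> 'a" where "swp p = (snd p, fst p)"

lemma cstar_app: "cstar f (K, L) = cnj (f (L, K))" by (simp add: cstar_def)
lemma cstar_cstar: "cstar (cstar f) = f" by (auto simp: cstar_def fun_eq_iff)
lemma csupp_cstar: "csupp (cstar f) = swp ` csupp f"
  by (auto simp: csupp_def cstar_def swp_def image_iff)
lemma fin_cstar: "fin f \<Longrightarrow> fin (cstar f)" by (simp add: csupp_cstar)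
lemma inj_swp: "inj_on swp S" by (auto simp: inj_on_def swp_def prod_eq_iff)
lemma cstar_add: "cstar (\<lambda>m. f m + g m) = (\<lambda>m. cstar f m + cstar g m)"
  by (auto simp: cstar_def fun_eq_iff)
lemma cstar_scale: "cstar (\<lambda>m. c * f m) = (\<lambda>m. cnj c * cstar f m)"
  by (auto simp: cstar_def fun_eq_iff)
lemma cstar_mono: "cstar (mono (K, L)) = mono (L, K)"
  by (auto simp: cstar_def mono_def fun_eq_iff)
lemma cstar_zero: "cstar (\<lambda>_. 0) = (\<lambda>_. 0)" by (auto simp: cstar_def fun_eq_iff)

lemma pk_real: "cnj (pk h K L N A) = pk h K L N A" by (simp add: pk_def)

lemma pk_adj: "pk h K L N A * fw h A = cnj (pk h L K A N) * fw h N"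
proof (cases "L \<le> N \<and> (\<lambda>j. K j + (N j - L j)) = A")
  case True
  then have LN: "L \<le> N" and AA: "A = (\<lambda>j. K j + (N j - L j))" by auto
  have KA: "K \<le> A" using AA by (auto simp: le_fun_def)
  have NN: "(\<lambda>j. L j + (A j - K j)) = N" using LN AA by (auto simp: le_fun_def fun_eq_iff)
  have R: "(\<lambda>j. A j - K j) = (\<lambda>j. N j - L j)" using AA by auto
  have dA: "deg A = deg K + (deg N - deg L)" unfolding AA deg_add deg_sub[OF LN] ..
  have dN: "deg L \<le> deg N" using deg_mono[OF LN] .
  have hp: "h ^ deg L * h ^ deg A = h ^ deg K * h ^ deg N"
    using dA dN by (simp add: power_add[symmetric])
  define R' where "R' = (\<lambda>j. N j - L j)"
  have p1: "pk h K L N A = complex_of_real (h ^ deg L * (mfact N / mfact R'))"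
    using True unfolding pk_def R'_def by simp
  have p2: "pk h L K A N = complex_of_real (h ^ deg K * (mfact A / mfact R'))"
    using KA NN R unfolding pk_def R'_def by simp
  have "h ^ deg L * (mfact N / mfact R') * (h ^ deg A * mfact A) = (h ^ deg L * h ^ deg A) * (mfact N * mfact A / mfact R')"
    by (simp add: mult_ac)
  also have "\<dots> = (h ^ deg K * h ^ deg N) * (mfact N * mfact A / mfact R')" by (simp only: hp)
  also have "\<dots> = h ^ deg K * (mfact A / mfact R') * (h ^ deg N * mfact N)" by (simp add: mult_ac)
  finally have e: "h ^ deg L * (mfact N / mfact R') * (h ^ deg A * mfact A) = h ^ deg K * (mfact A / mfact R') * (h ^ deg N * mfact N)" .
  show ?thesis unfolding p1 p2 fw_def
    by (simp only: complex_cnj_complex_of_real of_real_mult[symmetric] e)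
next
  case False
  have "\<not> (K \<le> A \<and> (\<lambda>j. L j + (A j - K j)) = N)"
  proof
    assume a: "K \<le> A \<and> (\<lambda>j. L j + (A j - K j)) = N"
    then have "\<forall>x. K x \<le> A x" "\<forall>x. L x + (A x - K x) = N x" by (auto simp: le_fun_def fun_eq_iff)
    then have "L \<le> N \<and> (\<lambda>j. K j + (N j - L j)) = A"
      unfolding le_fun_def fun_eq_iff by (metis add_diff_cancel_left' le_add1 le_add_diff_inverse)
    with False show False by simp
  qed
  then have "pk h L K A N = 0" unfolding pk_def by (rule if_not_P)
  moreover have "pk h K L N A = 0" using False unfolding pk_def by (rule if_not_P)
  ultimately show ?thesis by simp
qed

lemma pi_rep_cstar:
  assumes "fin f" "fin u"
  shows "pi_rep h (cstar f) u N = (\<Sum>p\<in>csupp f. \<Sum>A\<in>csupp u. cnj (f p) * u A * pk h (snd p) (fst p) A N)"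
proof -
  have "pi_rep h (cstar f) u N = (\<Sum>p'\<in>swp ` csupp f. \<Sum>A\<in>csupp u. cstar f p' * u A * pk h (fst p') (snd p') A N)"
  proof -
    have fS: "finite (swp ` csupp f)" using assms(1) by simp
    have sS: "csupp (cstar f) \<subseteq> swp ` csupp f" by (simp add: csupp_cstar)
    show ?thesis using pi_rep_eq[OF fS sS assms(2) order_refl, of h N] by (simp add: split_def)
  qed
  also have "\<dots> = (\<Sum>p\<in>csupp f. \<Sum>A\<in>csupp u. cnj (f p) * u A * pk h (snd p) (fst p) A N)"
    by (subst sum.reindex[OF inj_swp]) (simp add: swp_def cstar_def split_def)
  finally show ?thesis .
qed

lemma fock_pi_adj:
  assumes f: "fin f" and u: "fin u" and w: "fin w"
  shows "fock_inner h u (pi_rep h f w) = fock_inner h (pi_rep h (cstar f) u) w"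
proof -
  let ?F = "csupp f" and ?U = "csupp u" and ?W = "csupp w"
  have "fock_inner h u (pi_rep h f w) = (\<Sum>A\<in>?U. cnj (u A) * pi_rep h f w A * fw h A)"
    by (rule fock_eq[OF u Int_lower1])
  also have "\<dots> = (\<Sum>A\<in>?U. \<Sum>p\<in>?F. \<Sum>N\<in>?W. f p * cnj (u A) * w N * (pk h (fst p) (snd p) N A * fw h A))"
    unfolding pi_rep_eq[OF f order_refl w order_refl]
    by (simp add: split_def sum_distrib_left sum_distrib_right mult_ac)
  also have "\<dots> = (\<Sum>p\<in>?F. \<Sum>A\<in>?U. \<Sum>N\<in>?W. f p * cnj (u A) * w N * (pk h (fst p) (snd p) N A * fw h A))"
    by (rule sum.swap)
  also have "\<dots> = (\<Sum>p\<in>?F. \<Sum>A\<in>?U. \<Sum>N\<in>?W. f p * cnj (u A) * w N * (cnj (pk h (snd p) (fst p) A N) * fw h N))"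
    by (simp only: pk_adj)
  also have "\<dots> = (\<Sum>N\<in>?W. \<Sum>p\<in>?F. \<Sum>A\<in>?U. f p * cnj (u A) * w N * (cnj (pk h (snd p) (fst p) A N) * fw h N))"
    by (rule sum_swap3[symmetric])
  also have "\<dots> = (\<Sum>N\<in>?W. cnj (pi_rep h (cstar f) u N) * w N * fw h N)"
    unfolding pi_rep_cstar[OF f u]
    by (simp add: cnj_sum sum_distrib_left sum_distrib_right mult_ac)
  also have "\<dots> = fock_inner h (pi_rep h (cstar f) u) w"
    by (rule fock_eq[symmetric, OF w Int_lower2])
  finally show ?thesis .
qed

lemma fock_pi_adj':
  assumes f: "fin f" and u: "fin u" and w: "fin w"
  shows "fock_inner h (pi_rep h f u) w = fock_inner h u (pi_rep h (cstar f) w)"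
  using fock_pi_adj[OF fin_cstar[OF f] u w] by (simp add: cstar_cstar)

lemma wcoef_sym: "wcoef h L K' M = wcoef h K' L M"
  by (simp add: wcoef_def mult_ac)

lemma wk_swap: "wk h L' K' L K A B = wk h K L K' L' B A"
  unfolding wk_def
proof (rule sum.cong)
  show "{M. M \<le> K' \<and> M \<le> L} = {M. M \<le> L \<and> M \<le> K'}" by auto
next
  fix M assume M: "M \<in> {M. M \<le> L \<and> M \<le> K'}"
  have e1: "(\<lambda>j. L' j + L j - M j) = (\<lambda>j. L j - M j + L' j)" using M by (auto simp: le_fun_def fun_eq_iff)
  have e2: "(\<lambda>j. K' j - M j + K j) = (\<lambda>j. K j + K' j - M j)" using M by (auto simp: le_fun_def fun_eq_iff)
  show "(if (\<lambda>j. L' j + L j - M j) = A \<and> (\<lambda>j. K' j - M j + K j) = B then complex_of_real (wcoef h K' L M) else 0) =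
        (if (\<lambda>j. K j + K' j - M j) = B \<and> (\<lambda>j. L j - M j + L' j) = A then complex_of_real (wcoef h L K' M) else 0)"
    unfolding e1 e2 wcoef_sym[of h K' L] by auto
qed

lemma wk_real: "cnj (wk h K L K' L' A B) = wk h K L K' L' A B"
  unfolding wk_def by (simp add: cnj_sum if_distrib cong: if_cong)

lemma wick_star:
  assumes a: "fin a" and b: "fin b"
  shows "cstar (wick h a b) = wick h (cstar b) (cstar a)"
proof (rule ext, clarify)
  fix A B
  have "cstar (wick h a b) (A, B) = cnj (wick h a b (B, A))" by (simp add: cstar_def)
  also have "\<dots> = (\<Sum>p\<in>csupp a. \<Sum>q\<in>csupp b. cnj (a p) * cnj (b q) * wk h (fst p) (snd p) (fst q) (snd q) B A)"
    unfolding wick_eq[OF a order_refl b order_refl] by (simp add: split_def cnj_sum wk_real)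
  also have "\<dots> = (\<Sum>q\<in>csupp b. \<Sum>p\<in>csupp a. cnj (b q) * cnj (a p) * wk h (snd q) (fst q) (snd p) (fst p) A B)"
    by (subst sum.swap) (simp add: wk_swap mult_ac)
  also have "\<dots> = wick h (cstar b) (cstar a) (A, B)"
    unfolding wick_eq[OF fin_cstar[OF b] order_refl fin_cstar[OF a] order_refl] csupp_cstar sum.reindex[OF inj_swp]
    by (simp add: swp_def split_def cstar_def)
  finally show "cstar (wick h a b) (A, B) = wick h (cstar b) (cstar a) (A, B)" .
qed

lemma Balg_fin: "f \<in> Balg \<Longrightarrow> fin f" by (simp add: Balg_def)
lemma BalgD: "f \<in> Balg \<Longrightarrow> f (K, L) \<noteq> 0 \<Longrightarrow> deg K = deg L"
  by (auto simp: Balg_def csupp_def)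
lemma BalgI: "fin f \<Longrightarrow> (\<And>K L. f (K, L) \<noteq> 0 \<Longrightarrow> deg K = deg L) \<Longrightarrow> f \<in> Balg"
  by (auto simp: Balg_def csupp_def)

lemma Balg_add: "f \<in> Balg \<Longrightarrow> g \<in> Balg \<Longrightarrow> (\<lambda>m. f m + g m) \<in> Balg"
proof (rule BalgI)
  fix K L assume "f \<in> Balg" "g \<in> Balg" "f (K, L) + g (K, L) \<noteq> 0"
  then show "deg K = deg L" by (metis add_0 BalgD)
qed (auto simp: Balg_fin fin_add)
lemma Balg_scale: "f \<in> Balg \<Longrightarrow> (\<lambda>m. c * f m) \<in> Balg"
  by (rule BalgI) (auto simp: Balg_fin fin_scale dest: BalgD)
lemma Balg_zero: "(\<lambda>_. 0) \<in> Balg"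
  by (rule BalgI) (auto simp: fin_zero)
lemma Balg_sum: "finite I \<Longrightarrow> (\<And>i. i \<in> I \<Longrightarrow> F i \<in> Balg) \<Longrightarrow> (\<lambda>m. \<Sum>i\<in>I. F i m) \<in> Balg"
  by (induction I rule: finite_induct) (auto simp: Balg_zero intro: Balg_add[simplified])
lemma Balg_diff: "f \<in> Balg \<Longrightarrow> g \<in> Balg \<Longrightarrow> (\<lambda>m. f m - g m) \<in> Balg"
  using Balg_add[of f "\<lambda>m. (-1) * g m"] Balg_scale[of g "-1"] by simp
lemma Balg_cstar: "f \<in> Balg \<Longrightarrow> cstar f \<in> Balg"
proof (rule BalgI)
  show "f \<in> Balg \<Longrightarrow> fin (cstar f)" by (simp add: Balg_fin fin_cstar)
qed (auto simp: cstar_def dest: BalgD)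
lemma mono_Balg: "deg K = deg L \<Longrightarrow> mono (K, L) \<in> Balg"
proof (rule BalgI)
  show "fin (mono (K, L))" by (rule fin_mono)
qed (auto simp: mono_def split: if_splits)

lemma Balg_wick:
  assumes a: "a \<in> Balg" and b: "b \<in> Balg"
  shows "wick h a b \<in> Balg"
proof (rule BalgI)
  show "fin (wick h a b)" using a b by (simp add: Balg_fin fin_wick)
next
  fix A B assume "wick h a b (A, B) \<noteq> 0"
  then have "(A, B) \<in> WS a b" using csupp_wick[of h a b] by (auto simp: csupp_def)
  then obtain K L K' L' M where p: "(K,L) \<in> csupp a" and q: "(K',L') \<in> csupp b" and M: "M \<le> L" "M \<le> K'"
    and AB: "A = (\<lambda>j. K j + K' j - M j)" "B = (\<lambda>j. L j - M j + L' j)"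
    unfolding WS_def by auto
  have d1: "deg K = deg L" using p a by (auto simp: csupp_def dest: BalgD)
  have d2: "deg K' = deg L'" using q b by (auto simp: csupp_def dest: BalgD)
  have M2: "M \<le> (\<lambda>j. K j + K' j)" using M by (auto simp: le_fun_def intro: trans_le_add2)
  have "deg A = deg K + deg K' - deg M" unfolding AB deg_sub[OF M2] deg_add ..
  moreover have "deg B = deg L - deg M + deg L'" unfolding AB deg_add deg_sub[OF M(1)] ..
  moreover have "deg M \<le> deg L" "deg M \<le> deg K'" using deg_mono M by auto
  ultimately show "deg A = deg B" using d1 d2 by simp
qed

lemma one_p_mono: "one_p = mono ((\<lambda>_. 0), (\<lambda>_. 0))"
  by (auto simp: one_p_def mono_def fun_eq_iff)
lemma one_Balg: "one_p \<in> Balg" unfolding one_p_mono by (rule mono_Balg) simp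

lemma mono_decomp: "fin f \<Longrightarrow> f = (\<lambda>m. \<Sum>p\<in>csupp f. f p * mono p m)"
  by (auto simp: fun_eq_iff mono_def csupp_def if_distrib sum.delta' cong: if_cong)

lemma pi_sum1: "finite I \<Longrightarrow> (\<And>i. i \<in> I \<Longrightarrow> fin (F i)) \<Longrightarrow> fin v \<Longrightarrow>
  pi_rep h (\<lambda>m. \<Sum>i\<in>I. F i m) v = (\<lambda>A. \<Sum>i\<in>I. pi_rep h (F i) v A)"
proof (induction I rule: finite_induct)
  case empty
  then show ?case by (simp add: pi_rep_def csupp_def)
next
  case (insert x I)
  then show ?case by (simp add: pi_add1 fin_sum)
qed

lemma pi_sum2: "finite I \<Longrightarrow> (\<And>i. i \<in> I \<Longrightarrow> fin (G i)) \<Longrightarrow> fin f \<Longrightarrow>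
  pi_rep h f (\<lambda>m. \<Sum>i\<in>I. G i m) = (\<lambda>A. \<Sum>i\<in>I. pi_rep h f (G i) A)"
proof (induction I rule: finite_induct)
  case empty
  then show ?case by (simp add: pi_rep_def csupp_def)
next
  case (insert x I)
  then show ?case by (simp add: pi_add2 fin_sum)
qed

lemma wick_sum1: "finite I \<Longrightarrow> (\<And>i. i \<in> I \<Longrightarrow> fin (F i)) \<Longrightarrow> fin g \<Longrightarrow>
  wick h (\<lambda>m. \<Sum>i\<in>I. F i m) g = (\<lambda>x. \<Sum>i\<in>I. wick h (F i) g x)"
proof (induction I rule: finite_induct)
  case empty
  then show ?case by (simp add: wick_def csupp_def)
next
  case (insert x I)
  then show ?case by (simp add: wick_add1 fin_sum)
qed

lemma wick_sum2: "finite I \<Longrightarrow> (\<And>i. i \<in> I \<Longrightarrow> fin (G i)) \<Longrightarrow> fin f \<Longrightarrow>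
  wick h f (\<lambda>m. \<Sum>i\<in>I. G i m) = (\<lambda>x. \<Sum>i\<in>I. wick h f (G i) x)"
proof (induction I rule: finite_induct)
  case empty
  then show ?case by (simp add: wick_def csupp_def)
next
  case (insert x I)
  then show ?case by (simp add: wick_add2 fin_sum)
qed

definition ev :: "'i \<Rightarrow> 'i \<Rightarrow> nat" where "ev i = (\<lambda>j. if j = i then 1 else 0)"

lemma ev_inj: "ev i = ev j \<longleftrightarrow> i = j"
  by (auto simp: ev_def fun_eq_iff split: if_splits)

lemma deg_ev: "deg (ev i :: 'i::finite \<Rightarrow> nat) = 1"
  by (simp add: deg_def ev_def)

lemma deg_zero: "deg (\<lambda>_::'i::finite. 0::nat) = 0" by (simp add: deg_def)
lemma mfact_zero: "mfact (\<lambda>_::'i::finite. 0::nat) = 1" by (simp add: mfact_def)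
lemma mfact_ev: "mfact (ev i :: 'i::finite \<Rightarrow> nat) = 1"
  unfolding mfact_def ev_def by (rule prod.neutral) auto

lemma deg_one_iff: "deg (K::'i::finite \<Rightarrow> nat) = 1 \<longleftrightarrow> (\<exists>i. K = ev i)"
proof
  assume d: "deg K = 1"
  then obtain i where i: "K i \<noteq> 0" using deg_zero_iff[of K] by auto
  have s: "deg K = K i + (\<Sum>j\<in>UNIV - {i}. K j)"
    unfolding deg_def by (simp add: sum.remove[of UNIV i])
  have Ki: "K i = 1" using d i s by linarith
  have s0: "(\<Sum>j\<in>UNIV - {i}. K j) = 0" using d s Ki by linarith
  have z: "K j = 0" if "j \<noteq> i" for j using s0 sum_eq_0_iff[of "UNIV - {i}" K] that by auto
  have "K = ev i"
  proof (rule ext)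
    fix j show "K j = ev i j" using z Ki by (cases "j = i") (auto simp: ev_def)
  qed
  then show "\<exists>i. K = ev i" ..
qed (auto simp: deg_ev)

lemma mfact_ratio:
  assumes "1 \<le> L i"
  shows "mfact L / mfact (\<lambda>j. L j - ev i j) = real (L (i::'i::finite))"
proof -
  have "mfact L = fact (L i) * (\<Prod>j\<in>UNIV - {i}. fact (L j))"
    unfolding mfact_def by (simp add: prod.remove[of UNIV i])
  moreover have "mfact (\<lambda>j. L j - ev i j) = fact (L i - 1) * (\<Prod>j\<in>UNIV - {i}. fact (L j))"
    unfolding mfact_def by (simp add: prod.remove[of UNIV i] ev_def)
  moreover have "fact (L i) = real (L i) * fact (L i - 1)"
    using assms by (intro fact_reduce) simp
  moreover have "(\<Prod>j\<in>UNIV - {i}. fact (L j) :: real) \<noteq> 0" by simp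
  ultimately show ?thesis by simp
qed

lemma wick_mono_mono: "wick h (mono (K, L)) (mono (K', L')) (A, B) = wk h K L K' L' A B"
proof -
  have "wick h (mono (K, L)) (mono (K', L')) (A, B) = (\<Sum>(K1,L1)\<in>{(K,L)}. \<Sum>(K2,L2)\<in>{(K',L')}.
     mono (K, L) (K1,L1) * mono (K', L') (K2,L2) * wk h K1 L1 K2 L2 A B)"
    by (rule wick_eq) (simp_all add: csupp_mono)
  then show ?thesis by (simp add: mono_def)
qed

lemma le_ev_iff: "M \<le> ev i \<longleftrightarrow> M = (\<lambda>_. 0) \<or> M = ev i"
proof
  assume "M \<le> ev i"
  then have "\<forall>j. M j \<le> (if j = i then 1 else 0)" by (auto simp: le_fun_def ev_def)
  then have a: "M j \<le> (if j = i then 1 else 0)" for j by blast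
  have z: "\<forall>j. j \<noteq> i \<longrightarrow> M j = 0"
  proof (intro allI impI)
    fix j assume "j \<noteq> i" then show "M j = 0" using a[of j] by simp
  qed
  have o: "M i \<le> 1" using a[of i] by simp
  show "M = (\<lambda>_. 0) \<or> M = ev i"
  proof (cases "M i = 0")
    case True
    have "M = (\<lambda>_. 0)"
    proof (rule ext)
      fix j show "M j = 0" using True z by (cases "j = i") auto
    qed
    then show ?thesis ..
  next
    case False then have "M i = 1" using o by simp
    have "M = ev i"
    proof (rule ext)
      fix j show "M j = ev i j" using \<open>M i = 1\<close> z by (cases "j = i") (auto simp: ev_def)
    qed
    then show ?thesis ..
  qed
qed (auto simp: le_fun_def ev_def)

lemma wcoef_zero: "wcoef h L K' (\<lambda>_. 0) = 1"
  by (simp add: wcoef_def deg_zero mfact_zero mfact_nz)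

lemma wcoef_ev: "1 \<le> L i \<Longrightarrow> wcoef h L (ev i) (ev i) = h * real (L i)"
proof -
  assume a: "1 \<le> L i"
  have "(\<lambda>j. ev i j - ev i j) = (\<lambda>_. 0)" by simp
  then show ?thesis
    unfolding wcoef_def using mfact_ratio[of L i, OF a] by (simp add: deg_ev mfact_ev mfact_zero)
qed

lemma sum_single: "sum g {x} = g x" by simp
lemma sum_two: "x \<noteq> y \<Longrightarrow> sum g {x, y} = g x + g y" by simp
lemma mono_app: "mono (X, Y) (A, B) = (if X = A \<and> Y = B then 1 else 0)"
  by (auto simp: mono_def)

lemma wick_mono_ev_pt:
  "wick h (mono (K, L)) (mono (ev i, ev j)) (A, B) = mono ((\<lambda>l. K l + ev i l), (\<lambda>l. L l + ev j l)) (A, B)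
       + complex_of_real (h * real (L i)) * mono (K, (\<lambda>l. L l - ev i l + ev j l)) (A, B)"
proof -
  have "wick h (mono (K, L)) (mono (ev i, ev j)) (A, B) = wk h K L (ev i) (ev j) A B" by (rule wick_mono_mono)
  also have "\<dots> = mono ((\<lambda>l. K l + ev i l), (\<lambda>l. L l + ev j l)) (A, B)
       + complex_of_real (h * real (L i)) * mono (K, (\<lambda>l. L l - ev i l + ev j l)) (A, B)"
  proof (cases "1 \<le> L i")
    case True
    have evL: "ev i \<le> L" using True by (auto simp: le_fun_def ev_def)
    have zL: "(\<lambda>_. 0) \<le> L" by (simp add: le_fun_def)
    have S: "{M. M \<le> L \<and> M \<le> ev i} = {(\<lambda>_. 0), ev i}"
    proof (rule set_eqI)
      fix M show "M \<in> {M. M \<le> L \<and> M \<le> ev i} \<longleftrightarrow> M \<in> {(\<lambda>_. 0), ev i}"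
        using le_ev_iff[of M i] evL zL by blast
    qed
    have ne: "(\<lambda>_. 0) \<noteq> ev i" by (auto simp: ev_def fun_eq_iff)
    have e: "(\<lambda>l. K l + ev i l - ev i l) = K" by simp
    have e0: "(\<lambda>l. K l + ev i l - 0) = (\<lambda>l. K l + ev i l)" "(\<lambda>l. L l - 0 + ev j l) = (\<lambda>l. L l + ev j l)" by simp_all
    have "wk h K L (ev i) (ev j) A B =
      (if (\<lambda>l. K l + ev i l - 0) = A \<and> (\<lambda>l. L l - 0 + ev j l) = B then complex_of_real (wcoef h L (ev i) (\<lambda>_. 0)) else 0)
      + (if (\<lambda>l. K l + ev i l - ev i l) = A \<and> (\<lambda>l. L l - ev i l + ev j l) = B then complex_of_real (wcoef h L (ev i) (ev i)) else 0)"
      unfolding wk_def S sum_two[OF ne] by (rule refl)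
    also have "\<dots> = mono ((\<lambda>l. K l + ev i l), (\<lambda>l. L l + ev j l)) (A, B)
       + complex_of_real (h * real (L i)) * mono (K, (\<lambda>l. L l - ev i l + ev j l)) (A, B)"
      unfolding e e0 wcoef_zero wcoef_ev[of L i h, OF True] mono_app by simp
    finally show ?thesis .
  next
    case False
    have evL: "\<not> ev i \<le> L" using False by (auto simp: le_fun_def ev_def)
    have zL: "(\<lambda>_. 0) \<le> L" by (simp add: le_fun_def)
    have S: "{M. M \<le> L \<and> M \<le> ev i} = {(\<lambda>_. 0)}"
    proof (rule set_eqI)
      fix M show "M \<in> {M. M \<le> L \<and> M \<le> ev i} \<longleftrightarrow> M \<in> {(\<lambda>_. 0)}"
        using le_ev_iff[of M i] evL zL by blast
    qed
    have Li: "complex_of_real (h * real (L i)) = 0" using False by simp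
    have e0: "(\<lambda>l. K l + ev i l - 0) = (\<lambda>l. K l + ev i l)" "(\<lambda>l. L l - 0 + ev j l) = (\<lambda>l. L l + ev j l)" by simp_all
    show ?thesis unfolding wk_def S sum_single Li e0 wcoef_zero mono_app by simp
  qed
  finally show ?thesis .
qed

lemma wick_mono_ev:
  "wick h (mono (K, L)) (mono (ev i, ev j)) =
    (\<lambda>m. mono ((\<lambda>l. K l + ev i l), (\<lambda>l. L l + ev j l)) m
       + complex_of_real (h * real (L i)) * mono (K, (\<lambda>l. L l - ev i l + ev j l)) m)"
proof (rule ext)
  fix x :: "'a mon" obtain A B where "x = (A, B)" by (cases x)
  then show "wick h (mono (K, L)) (mono (ev i, ev j)) x = mono ((\<lambda>l. K l + ev i l), (\<lambda>l. L l + ev j l)) x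
       + complex_of_real (h * real (L i)) * mono (K, (\<lambda>l. L l - ev i l + ev j l)) x"
    by (simp only: wick_mono_ev_pt)
qed

lemma J_decomp: "J_p = (\<lambda>m. \<Sum>i\<in>UNIV. mono (ev i, ev i) m)"
proof (rule ext, clarify)
  fix K L :: "'a \<Rightarrow> nat"
  show "J_p (K, L) = (\<Sum>i\<in>UNIV. mono (ev i, ev i) (K, L))"
  proof (cases "K = L \<and> deg K = 1")
    case True
    then obtain i where i: "K = ev i" "L = ev i" using deg_one_iff by blast
    then show ?thesis by (simp add: J_p_def mono_def ev_inj deg_ev)
  next
    case False
    then have "mono (ev i, ev i) (K, L) = 0" for i
      by (auto simp: mono_def deg_ev)
    then show ?thesis using False by (simp add: J_p_def)
  qed
qed

lemma fin_J: "fin J_p"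
  by (subst J_decomp) (auto intro!: fin_sum fin_mono)

lemma J_Balg: "J_p \<in> Balg"
  by (subst J_decomp) (auto intro!: Balg_sum mono_Balg)

definition mJ :: "('i::finite \<Rightarrow> nat) \<Rightarrow> ('i \<Rightarrow> nat) \<Rightarrow> 'i cpoly" where
  "mJ K L = (\<lambda>m. \<Sum>i\<in>UNIV. mono ((\<lambda>l. K l + ev i l), (\<lambda>l. L l + ev i l)) m)"

lemma wick_mono_J: "wick h (mono (K, L)) J_p = (\<lambda>m. mJ K L m + complex_of_real (h * real (deg L)) * mono (K, L) m)"
proof -
  have "wick h (mono (K, L)) J_p = (\<lambda>x. \<Sum>i\<in>UNIV. wick h (mono (K, L)) (mono (ev i, ev i)) x)"
    by (subst J_decomp, rule wick_sum2) (auto simp: fin_mono)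
  also have "\<dots> = (\<lambda>x. \<Sum>i\<in>UNIV. mono ((\<lambda>l. K l + ev i l), (\<lambda>l. L l + ev i l)) x
       + complex_of_real (h * real (L i)) * mono (K, L) x)"
  proof (rule ext, rule sum.cong[OF refl])
    fix x i
    have "complex_of_real (h * real (L i)) * mono (K, (\<lambda>l. L l - ev i l + ev i l)) x =
          complex_of_real (h * real (L i)) * mono (K, L) x"
      by (cases "L i = 0") (auto simp: ev_def cong: if_cong)
    then show "wick h (mono (K, L)) (mono (ev i, ev i)) x = mono ((\<lambda>l. K l + ev i l), (\<lambda>l. L l + ev i l)) x
       + complex_of_real (h * real (L i)) * mono (K, L) x"
      by (simp add: wick_mono_ev)
  qed
  also have "\<dots> = (\<lambda>m. mJ K L m + complex_of_real (h * real (deg L)) * mono (K, L) m)"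
    by (simp add: mJ_def sum.distrib deg_def sum_distrib_left sum_distrib_right)
  finally show ?thesis .
qed

lemma wick_one: "fin f \<Longrightarrow> wick h f one_p = f"
proof (rule ext, clarify)
  fix A B assume f: "fin f"
  have wk0: "wk h K L (\<lambda>_. 0) (\<lambda>_. 0) A B = (if K = A \<and> L = B then 1 else 0)" for K L :: "'a \<Rightarrow> nat"
  proof -
    have S0: "{M. M \<le> L \<and> M \<le> (\<lambda>_. 0)} = {(\<lambda>_. 0::nat)}" by (auto simp: le_fun_def fun_eq_iff)
    show ?thesis unfolding wk_def S0 by (simp add: wcoef_zero)
  qed
  have "wick h f one_p (A, B) = (\<Sum>(K, L)\<in>csupp f. f (K, L) * wk h K L (\<lambda>_. 0) (\<lambda>_. 0) A B)"
    unfolding one_p_mono wick_eq[OF f order_refl fin_mono order_refl] csupp_mono by (simp add: mono_def)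
  also have "\<dots> = (\<Sum>p\<in>csupp f. if p = (A, B) then f p else 0)"
    unfolding wk0 by (intro sum.cong refl) (auto simp: prod_eq_iff)
  also have "\<dots> = f (A, B)" using f by (simp add: sum.delta) (simp add: csupp_def)
  finally show "wick h f one_p (A, B) = f (A, B)" .
qed

definition Jc :: "complex \<Rightarrow> 'i::finite cpoly" where
  "Jc c = (\<lambda>m. J_p m - c * one_p m)"

lemma fin_one: "fin one_p" by (simp add: one_p_mono fin_mono)
lemma fin_Jc: "fin (Jc c)"
  unfolding Jc_def using fin_add[OF fin_J fin_scale[OF fin_one, of "-c"]] by simp
lemma Jc_Balg: "Jc c \<in> Balg"
  unfolding Jc_def by (rule Balg_diff[OF J_Balg Balg_scale[OF one_Balg]])

lemma wick_Jc: "fin f \<Longrightarrow> wick h f (Jc c) = (\<lambda>m. wick h f J_p m - c * f m)"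
proof -
  assume f: "fin f"
  have e: "Jc c = (\<lambda>m. J_p m + (- c) * one_p m)" unfolding Jc_def by simp
  have "wick h f (Jc c) = (\<lambda>m. wick h f J_p m + wick h f (\<lambda>m. (- c) * one_p m) m)"
    unfolding e by (rule wick_add2[OF f fin_J fin_scale[OF fin_one]])
  also have "\<dots> = (\<lambda>m. wick h f J_p m - c * f m)"
    by (simp only: wick_scale2[OF f fin_one] wick_one[OF f]) simp
  finally show ?thesis .
qed

lemma wick_mono_Jc: "wick h (mono (K, L)) (Jc c) =
   (\<lambda>m. mJ K L m + (complex_of_real (h * real (deg L)) - c) * mono (K, L) m)"
  by (simp add: wick_Jc fin_mono wick_mono_J algebra_simps)

lemma cstar_J: "cstar J_p = J_p"
proof (rule ext, clarify)
  fix K L :: "'a \<Rightarrow> nat"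
  show "cstar J_p (K, L) = J_p (K, L)" by (cases "K = L") (auto simp: cstar_def J_p_def)
qed
lemma cstar_one: "cstar one_p = one_p" by (simp add: one_p_mono cstar_mono)
lemma cstar_Jc: "cstar (Jc (complex_of_real r)) = Jc (complex_of_real r)"
proof -
  have e: "Jc (complex_of_real r) = (\<lambda>m. J_p m + complex_of_real (- r) * one_p m)" unfolding Jc_def by simp
  show ?thesis unfolding e cstar_add cstar_scale cstar_J cstar_one by simp
qed

lemma pi_one: "fin v \<Longrightarrow> pi_rep h one_p v = v"
proof (rule ext)
  fix A assume v: "fin v"
  have "pi_rep h one_p v A = (\<Sum>N\<in>csupp v. v N * pk h (\<lambda>_. 0) (\<lambda>_. 0) N A)"
    unfolding one_p_mono pi_rep_eq[OF fin_mono order_refl v order_refl] csupp_mono by (simp add: mono_def)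
  also have "\<dots> = (\<Sum>N\<in>csupp v. if N = A then v N else 0)"
    by (intro sum.cong refl) (auto simp: pk_def deg_zero le_fun_def mfact_nz)
  also have "\<dots> = v A" using v by (simp add: sum.delta') (simp add: csupp_def)
  finally show "pi_rep h one_p v A = v A" .
qed

lemma pi_mono_ev: "fin v \<Longrightarrow> pi_rep h (mono (ev i, ev i)) v A = complex_of_real (h * real (A i)) * v A"
proof -
  assume v: "fin v"
  have "pi_rep h (mono (ev i, ev i)) v A = (\<Sum>N\<in>csupp v. v N * pk h (ev i) (ev i) N A)"
    unfolding pi_rep_eq[OF fin_mono order_refl v order_refl] csupp_mono by (simp add: mono_def)
  also have "\<dots> = (\<Sum>N\<in>csupp v. if N = A then complex_of_real (h * real (A i)) * v A else 0)"
  proof (intro sum.cong refl)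
    fix N
    show "v N * pk h (ev i) (ev i) N A = (if N = A then complex_of_real (h * real (A i)) * v A else 0)"
    proof (cases "N = A")
      case False
      have "(\<lambda>j. ev i j + (N j - ev i j)) \<noteq> A" if "ev i \<le> N"
      proof -
        have "(\<lambda>j. ev i j + (N j - ev i j)) = N" using that by (auto simp: le_fun_def fun_eq_iff)
        then show ?thesis using False by simp
      qed
      then have "pk h (ev i) (ev i) N A = 0" unfolding pk_def by auto
      then show ?thesis using False by simp
    next
      case True
      show ?thesis
      proof (cases "1 \<le> A i")
        case c: True
        have le: "ev i \<le> A" using c by (auto simp: le_fun_def ev_def)
        have eq: "(\<lambda>j. ev i j + (A j - ev i j)) = A" using c by (auto simp: ev_def fun_eq_iff)
        have "pk h (ev i) (ev i) A A = complex_of_real (h * real (A i))"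
          unfolding pk_def using le eq by (simp add: deg_ev mfact_ratio[of A i, OF c])
        then show ?thesis using True by simp
      next
        case c: False
        then have "\<not> ev i \<le> A" by (auto simp: le_fun_def ev_def)
        then have "pk h (ev i) (ev i) A A = 0" unfolding pk_def by auto
        then show ?thesis using True c by simp
      qed
    qed
  qed
  also have "\<dots> = complex_of_real (h * real (A i)) * v A" using v by (simp add: sum.delta') (simp add: csupp_def)
  finally show ?thesis .
qed

lemma pi_J: "fin v \<Longrightarrow> pi_rep h J_p v = (\<lambda>A. complex_of_real (h * real (deg A)) * v A)"
proof -
  assume v: "fin v"
  have "pi_rep h J_p v = (\<lambda>A. \<Sum>i\<in>UNIV. pi_rep h (mono (ev i, ev i)) v A)"
    by (subst J_decomp, rule pi_sum1) (auto simp: fin_mono v)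
  also have "\<dots> = (\<lambda>A. complex_of_real (h * real (deg A)) * v A)"
    using v by (simp add: pi_mono_ev deg_def sum_distrib_left sum_distrib_right)
  finally show ?thesis .
qed

lemma pi_Jc: "fin v \<Longrightarrow> pi_rep h (Jc c) v = (\<lambda>A. (complex_of_real (h * real (deg A)) - c) * v A)"
proof -
  assume v: "fin v"
  have e: "Jc c = (\<lambda>m. J_p m + (- c) * one_p m)" unfolding Jc_def by simp
  have "pi_rep h (Jc c) v = (\<lambda>m. pi_rep h J_p v m + pi_rep h (\<lambda>m. (- c) * one_p m) v m)"
    unfolding e by (rule pi_add1[OF fin_J fin_scale[OF fin_one] v])
  also have "\<dots> = (\<lambda>A. (complex_of_real (h * real (deg A)) - c) * v A)"
    by (simp only: pi_scale1[OF fin_one v] pi_one[OF v] pi_J[OF v]) (simp add: algebra_simps)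
  finally show ?thesis .
qed

section \<open>States\<close>

lemma st_add: "is_state h \<omega> \<Longrightarrow> f \<in> Balg \<Longrightarrow> g \<in> Balg \<Longrightarrow> \<omega> (\<lambda>m. f m + g m) = \<omega> f + \<omega> g"
  by (simp add: is_state_def)
lemma st_scale: "is_state h \<omega> \<Longrightarrow> f \<in> Balg \<Longrightarrow> \<omega> (\<lambda>m. c * f m) = c * \<omega> f"
  by (simp add: is_state_def)
lemma st_one: "is_state h \<omega> \<Longrightarrow> \<omega> one_p = 1"
  by (simp add: is_state_def)
lemma st_herm: "is_state h \<omega> \<Longrightarrow> f \<in> Balg \<Longrightarrow> cstar f = f \<Longrightarrow> Im (\<omega> f) = 0"
  by (simp add: is_state_def)
lemma st_pos: "is_state h \<omega> \<Longrightarrow> f \<in> pos_cone h \<Longrightarrow> Im (\<omega> f) = 0 \<and> 0 \<le> Re (\<omega> f)"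
  by (simp add: is_state_def)
lemma st_zero: "is_state h \<omega> \<Longrightarrow> \<omega> (\<lambda>_. 0) = 0"
  using st_scale[of h \<omega> one_p 0] one_Balg by simp
lemma st_diff: "is_state h \<omega> \<Longrightarrow> f \<in> Balg \<Longrightarrow> g \<in> Balg \<Longrightarrow> \<omega> (\<lambda>m. f m - g m) = \<omega> f - \<omega> g"
  using st_add[of h \<omega> f "\<lambda>m. (-1) * g m"] st_scale[of h \<omega> g "-1"] Balg_scale[of g "-1"] by simp
lemma st_sum: assumes st: "is_state h \<omega>" shows "finite I \<Longrightarrow> (\<And>i. i \<in> I \<Longrightarrow> F i \<in> Balg) \<Longrightarrow>
   \<omega> (\<lambda>m. \<Sum>i\<in>I. F i m) = (\<Sum>i\<in>I. \<omega> (F i))"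
proof (induction I rule: finite_induct)
  case empty
  show ?case using st_zero[OF st] by simp
next
  case (insert x I)
  have "\<omega> (\<lambda>m. \<Sum>i\<in>insert x I. F i m) = \<omega> (\<lambda>m. F x m + (\<Sum>i\<in>I. F i m))"
    using insert by simp
  also have "\<dots> = \<omega> (F x) + \<omega> (\<lambda>m. \<Sum>i\<in>I. F i m)"
    using insert by (intro st_add[OF st] Balg_sum) auto
  finally show ?case using insert by simp
qed

lemma st_cstar:
  assumes st: "is_state h \<omega>" and x: "x \<in> Balg"
  shows "\<omega> (cstar x) = cnj (\<omega> x)"
proof -
  define a where "a = (\<lambda>m. (1/2) * (x m + cstar x m))"
  define b where "b = (\<lambda>m. (- \<i>/2) * (x m - cstar x m))"
  have aB: "a \<in> Balg" unfolding a_def by (intro Balg_scale Balg_add x Balg_cstar)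
  have bB: "b \<in> Balg" unfolding b_def by (intro Balg_scale Balg_diff x Balg_cstar)
  have ah: "cstar a = a"
  proof (rule ext, clarify)
    fix K L :: "'a \<Rightarrow> nat" show "cstar a (K, L) = a (K, L)"
      unfolding a_def by (simp add: cstar_def algebra_simps)
  qed
  have bh: "cstar b = b"
  proof (rule ext, clarify)
    fix K L :: "'a \<Rightarrow> nat" show "cstar b (K, L) = b (K, L)"
      unfolding b_def by (simp add: cstar_def algebra_simps)
  qed
  have xe: "x = (\<lambda>m. a m + \<i> * b m)"
    unfolding a_def b_def by (auto simp: fun_eq_iff algebra_simps)
  have xse: "cstar x = (\<lambda>m. a m + (- \<i>) * b m)"
    unfolding a_def b_def by (auto simp: fun_eq_iff algebra_simps)
  have wx: "\<omega> x = \<omega> a + \<i> * \<omega> b"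
    by (subst xe, subst st_add[OF st aB Balg_scale[OF bB]]) (simp add: st_scale[OF st bB])
  have wxs: "\<omega> (cstar x) = \<omega> a - \<i> * \<omega> b"
    by (subst xse, subst st_add[OF st aB Balg_scale[OF bB]], subst st_scale[OF st bB]) simp
  have ra: "Im (\<omega> a) = 0" by (rule st_herm[OF st aB ah])
  have rb: "Im (\<omega> b) = 0" by (rule st_herm[OF st bB bh])
  show ?thesis unfolding wx wxs using ra rb by (simp add: complex_eq_iff)
qed

lemma sq_pos:
  assumes h: "0 < h" and y: "y \<in> Balg"
  shows "wick h (cstar y) y \<in> pos_cone h"
proof -
  have fy: "fin y" using y by (rule Balg_fin)
  have fys: "fin (cstar y)" using fy by (rule fin_cstar)
  have "wick h (cstar y) y \<in> Balg" by (intro Balg_wick Balg_cstar y)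
  moreover have "cstar (wick h (cstar y) y) = wick h (cstar y) y"
    using wick_star[OF fys fy] by (simp add: cstar_cstar)
  moreover have "Im (fock_inner h g (pi_rep h (wick h (cstar y) y) g)) = 0 \<and>
                 0 \<le> Re (fock_inner h g (pi_rep h (wick h (cstar y) y) g))" if g: "fin g" for g
  proof -
    have "fock_inner h g (pi_rep h (wick h (cstar y) y) g) = fock_inner h g (pi_rep h (cstar y) (pi_rep h y g))"
      by (simp add: pi_wick[OF fys fy g])
    also have "\<dots> = fock_inner h (pi_rep h y g) (pi_rep h y g)"
      using fock_pi_adj[OF fys g fin_pi_rep[OF fy g]] by (simp add: cstar_cstar)
    finally show ?thesis using fock_self[of h "pi_rep h y g"] h by simp
  qed
  ultimately show ?thesis unfolding pos_cone_def by blast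
qed

lemma st_lin4:
  assumes st: "is_state h \<omega>" and B: "a \<in> Balg" "b \<in> Balg" "c \<in> Balg" "d \<in> Balg"
  shows "\<omega> (\<lambda>m. (a m + t * b m) + s * (c m + t * d m)) = (\<omega> a + t * \<omega> b) + s * (\<omega> c + t * \<omega> d)"
proof -
  have B1: "(\<lambda>m. a m + t * b m) \<in> Balg" using B by (intro Balg_add Balg_scale)
  have B2: "(\<lambda>m. c m + t * d m) \<in> Balg" using B by (intro Balg_add Balg_scale)
  have "\<omega> (\<lambda>m. (a m + t * b m) + s * (c m + t * d m)) = \<omega> (\<lambda>m. a m + t * b m) + \<omega> (\<lambda>m. s * (c m + t * d m))"
    using st_add[OF st B1 Balg_scale[OF B2]] by simp
  also have "\<dots> = (\<omega> a + t * \<omega> b) + s * (\<omega> c + t * \<omega> d)"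
    using st_add[OF st B(1) Balg_scale[OF B(2)]] st_add[OF st B(3) Balg_scale[OF B(4)]]
      st_scale[OF st B2, of s] st_scale[OF st B(2), of t] st_scale[OF st B(4), of t] by simp
  finally show ?thesis .
qed

lemma cauchy_schwarz_zero:
  assumes h: "0 < h" and st: "is_state h \<omega>" and y: "y \<in> Balg" and z: "z \<in> Balg"
    and zz: "\<omega> (wick h (cstar z) z) = 0"
  shows "\<omega> (wick h (cstar y) z) = 0"
proof (rule ccontr)
  define \<sigma> where "\<sigma> = \<omega> (wick h (cstar y) z)"
  assume "\<omega> (wick h (cstar y) z) \<noteq> 0"
  then have s0: "\<sigma> \<noteq> 0" unfolding \<sigma>_def .
  have fy: "fin y" "fin (cstar y)" using y by (auto simp: Balg_fin fin_cstar)
  have fz: "fin z" "fin (cstar z)" using z by (auto simp: Balg_fin fin_cstar)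
  have yB: "cstar y \<in> Balg" and zB: "cstar z \<in> Balg" using y z by (auto intro: Balg_cstar)
  have zy: "\<omega> (wick h (cstar z) y) = cnj \<sigma>"
  proof -
    have "cstar (wick h (cstar y) z) = wick h (cstar z) y"
      using wick_star[OF fy(2) fz(1)] by (simp add: cstar_cstar)
    then show ?thesis unfolding \<sigma>_def using st_cstar[OF st Balg_wick[OF yB z, of h]] by simp
  qed
  define E where "E = (\<lambda>t. \<omega> (wick h (cstar (\<lambda>m. y m + t * z m)) (\<lambda>m. y m + t * z m)))"
  have Eexp: "E t = \<omega> (wick h (cstar y) y) + t * \<sigma> + cnj t * cnj \<sigma>" for t
  proof -
    have fX: "fin (\<lambda>m. y m + t * z m)" using fy fz by (intro fin_add fin_scale)
    have e1: "cstar (\<lambda>m. y m + t * z m) = (\<lambda>m. cstar y m + cnj t * cstar z m)"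
      unfolding cstar_add cstar_scale ..
    have "wick h (cstar (\<lambda>m. y m + t * z m)) (\<lambda>m. y m + t * z m) =
       (\<lambda>m. (wick h (cstar y) y m + t * wick h (cstar y) z m) + cnj t * (wick h (cstar z) y m + t * wick h (cstar z) z m))"
      unfolding e1
      by (simp only: wick_add1[OF fy(2) fin_scale[OF fz(2)] fX] wick_scale1[OF fz(2) fX]
          wick_add2[OF fy(2) fy(1) fin_scale[OF fz(1)]] wick_add2[OF fz(2) fy(1) fin_scale[OF fz(1)]]
          wick_scale2[OF fy(2) fz(1)] wick_scale2[OF fz(2) fz(1)])
    then have "E t = (\<omega> (wick h (cstar y) y) + t * \<sigma>) + cnj t * (\<omega> (wick h (cstar z) y) + t * \<omega> (wick h (cstar z) z))"
      unfolding E_def \<sigma>_def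
      using st_lin4[OF st Balg_wick[OF yB y] Balg_wick[OF yB z] Balg_wick[OF zB y] Balg_wick[OF zB z]] by simp
    then show ?thesis using zy zz by (simp add: algebra_simps)
  qed
  have Epos: "0 \<le> Re (E t)" for t
  proof -
    have "(\<lambda>m. y m + t * z m) \<in> Balg" using y z by (intro Balg_add Balg_scale)
    then show ?thesis unfolding E_def using st_pos[OF st sq_pos[OF h]] by blast
  qed
  define c where "c = Re (\<omega> (wick h (cstar y) y))"
  define R where "R = (\<bar>c\<bar> + 1) / (2 * (cmod \<sigma>)\<^sup>2)"
  have sp: "0 < (cmod \<sigma>)\<^sup>2" using s0 by simp
  define t where "t = - complex_of_real R * cnj \<sigma>"
  have n: "cnj \<sigma> * \<sigma> = complex_of_real ((cmod \<sigma>)\<^sup>2)" by (simp only: complex_norm_square mult.commute)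
  have "t * \<sigma> = - complex_of_real R * (cnj \<sigma> * \<sigma>)" unfolding t_def by (simp only: mult.assoc)
  then have ts: "t * \<sigma> = - complex_of_real (R * (cmod \<sigma>)\<^sup>2)" unfolding n by simp
  have "Re (E t) = c - 2 * (R * (cmod \<sigma>)\<^sup>2)"
  proof -
    have "cnj t * cnj \<sigma> = cnj (t * \<sigma>)" by simp
    then have "Re (cnj t * cnj \<sigma>) = - (R * (cmod \<sigma>)\<^sup>2)" using ts by simp
    moreover have "Re (t * \<sigma>) = - (R * (cmod \<sigma>)\<^sup>2)" using ts by simp
    ultimately show ?thesis unfolding Eexp c_def by simp
  qed
  also have "R * (cmod \<sigma>)\<^sup>2 = (\<bar>c\<bar> + 1) / 2" unfolding R_def using sp by (simp add: field_simps)
  finally have "Re (E t) = c - 2 * ((\<bar>c\<bar> + 1) / 2)" .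
  then have "Re (E t) < 0" by (simp add: field_simps)
  with Epos[of t] show False by simp
qed

section \<open>Vector states\<close>

definition vs :: "real \<Rightarrow> 'i::finite fock \<Rightarrow> 'i cpoly \<Rightarrow> complex" where
  "vs h v f = fock_inner h v (pi_rep h f v) / fock_inner h v v"

definition degk :: "nat \<Rightarrow> 'i::finite fock \<Rightarrow> bool" where
  "degk k v \<longleftrightarrow> (\<forall>A. v A \<noteq> 0 \<longrightarrow> deg A = k)"

lemma fock_self_eq: "fock_inner h u u = complex_of_real (\<Sum>A\<in>csupp u. (cmod (u A))\<^sup>2 * (h ^ deg A * mfact A))"
  unfolding fock_inner_def of_real_sum
proof (intro sum.cong)
  fix x show "cnj (u x) * u x * complex_of_real (h ^ deg x * mfact x) =
       complex_of_real ((cmod (u x))\<^sup>2 * (h ^ deg x * mfact x))"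
    by (simp only: of_real_mult complex_norm_square mult_ac)
qed simp

lemma fock_pos:
  assumes h: "0 < h" and v: "fin v" and A: "v A \<noteq> 0"
  shows "0 < (\<Sum>A\<in>csupp v. (cmod (v A))\<^sup>2 * (h ^ deg A * mfact A))"
proof (rule sum_pos2[OF v])
  show "A \<in> csupp v" using A by (simp add: csupp_def)
  show "0 < (cmod (v A))\<^sup>2 * (h ^ deg A * mfact A)" using A h by (simp add: mfact_pos)
qed (use h in \<open>auto intro!: mult_nonneg_nonneg simp: mfact_pos less_imp_le\<close>)

lemma pi_zero_vec: "pi_rep h f (\<lambda>_. 0) = (\<lambda>_. 0)"
  by (simp add: pi_rep_def csupp_def fun_eq_iff)
lemma fock_zero2: "fock_inner h u (\<lambda>_. 0) = 0"
  by (simp add: fock_inner_def csupp_def)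
lemma fock_zero1: "fock_inner h (\<lambda>_. 0) u = 0"
  by (simp add: fock_inner_def csupp_def)

lemma vs_state:
  assumes h: "0 < h" and v: "fin v" and A: "v A \<noteq> 0"
  shows "is_state h (vs h v)"
proof -
  define r where "r = (\<Sum>A\<in>csupp v. (cmod (v A))\<^sup>2 * (h ^ deg A * mfact A))"
  have r: "0 < r" unfolding r_def by (rule fock_pos[OF h v A])
  have d: "fock_inner h v v = complex_of_real r" unfolding r_def by (rule fock_self_eq)
  have vsr: "vs h v f = fock_inner h v (pi_rep h f v) / complex_of_real r" for f
    unfolding vs_def d ..
  have add: "vs h v (\<lambda>m. f m + g m) = vs h v f + vs h v g" if "f \<in> Balg" "g \<in> Balg" for f g
    using that unfolding vsr
    by (simp add: pi_add1 Balg_fin v fock_add2 fin_pi_rep add_divide_distrib)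
  have scl: "vs h v (\<lambda>m. c * f m) = c * vs h v f" if "f \<in> Balg" for f c
    using that unfolding vsr by (simp add: pi_scale1 Balg_fin v fock_scale2 fin_pi_rep)
  have one: "vs h v one_p = 1" unfolding vsr pi_one[OF v] d using r by simp
  have herm: "Im (vs h v f) = 0" if f: "f \<in> Balg" "cstar f = f" for f
  proof -
    have "fock_inner h v (pi_rep h f v) = fock_inner h (pi_rep h f v) v"
      using fock_pi_adj[OF Balg_fin[OF f(1)] v v] f(2) by simp
    also have "\<dots> = cnj (fock_inner h v (pi_rep h f v))" by (rule fock_cnj)
    finally have "Im (fock_inner h v (pi_rep h f v)) = 0" by (metis cnj.simps(2) neg_equal_zero)
    then show ?thesis unfolding vsr by simp
  qed
  have pos: "Im (vs h v f) = 0 \<and> 0 \<le> Re (vs h v f)" if "f \<in> pos_cone h" for f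
    using that v r unfolding vsr pos_cone_def by auto
  show ?thesis unfolding is_state_def using add scl one herm pos by blast
qed

lemma vs_relevant:
  assumes h: "0 < h" and v: "fin v" and dk: "degk k v"
  shows "vs h v (wick h (Jc (complex_of_real (h * real k))) (Jc (complex_of_real (h * real k)))) = 0"
proof -
  have z: "pi_rep h (Jc (complex_of_real (h * real k))) v = (\<lambda>_. 0)"
    unfolding pi_Jc[OF v]
  proof (rule ext)
    fix A show "(complex_of_real (h * real (deg A)) - complex_of_real (h * real k)) * v A = 0"
      using dk unfolding degk_def by (cases "v A = 0") auto
  qed
  show ?thesis unfolding vs_def pi_wick[OF fin_Jc fin_Jc v] z pi_zero_vec fock_zero2 by simp
qed

lemma pi_Balg_deg:
  assumes f: "f \<in> Balg" and dk: "degk k v"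
  shows "degk k (pi_rep h f v)"
  unfolding degk_def
proof (intro allI impI)
  fix A assume "pi_rep h f v A \<noteq> 0"
  then have "(\<Sum>(K, L)\<in>csupp f. \<Sum>M\<in>csupp v. f (K, L) * v M * pk h K L M A) \<noteq> 0"
    unfolding pi_rep_csupp .
  from sum_nz_ex2[OF this] obtain K L where p: "(K, L) \<in> csupp f" and "(\<Sum>M\<in>csupp v. f (K, L) * v M * pk h K L M A) \<noteq> 0"
    by blast
  then obtain M where M: "M \<in> csupp v" "pk h K L M A \<noteq> 0" by (auto dest!: sum_nz_ex)
  then have LM: "L \<le> M" and AA: "A = (\<lambda>j. K j + (M j - L j))" unfolding pk_def by (auto split: if_splits)
  have "deg K = deg L" using p f by (auto simp: csupp_def dest: BalgD)
  moreover have "deg M = k" using M(1) dk by (auto simp: csupp_def degk_def)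
  moreover have "deg A = deg K + (deg M - deg L)" unfolding AA deg_add deg_sub[OF LM] ..
  moreover have "deg L \<le> deg M" using deg_mono[OF LM] .
  ultimately show "deg A = k" by simp
qed

lemma degk_add: "degk k u \<Longrightarrow> degk k w \<Longrightarrow> degk k (\<lambda>m. u m + c * w m)"
  unfolding degk_def by (metis add.right_neutral mult_zero_right)

lemma polarize:
  assumes f: "fin f" and u: "fin u" and w: "fin w"
    and Z: "\<And>x. fin x \<Longrightarrow> degk k x \<Longrightarrow> fock_inner h x (pi_rep h f x) = 0"
    and du: "degk k u" and dw: "degk k w"
  shows "fock_inner h u (pi_rep h f w) = 0"
proof -
  let ?Q = "\<lambda>a b. fock_inner h a (pi_rep h f b)"
  have fpu: "fin (pi_rep h f u)" and fpw: "fin (pi_rep h f w)" using f u w by (auto intro: fin_pi_rep)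
  have expand: "?Q (\<lambda>m. u m + c * w m) (\<lambda>m. u m + c * w m) = ?Q u u + c * ?Q u w + cnj c * ?Q w u + cnj c * c * ?Q w w" for c
  proof -
    have fcw: "fin (\<lambda>m. c * w m)" using w by (rule fin_scale)
    have "pi_rep h f (\<lambda>m. u m + c * w m) = (\<lambda>m. pi_rep h f u m + c * pi_rep h f w m)"
      by (simp only: pi_add2[OF f u fcw] pi_scale2[OF f w])
    moreover have "fock_inner h (\<lambda>m. u m + c * w m) (\<lambda>m. pi_rep h f u m + c * pi_rep h f w m) =
        fock_inner h u (\<lambda>m. pi_rep h f u m + c * pi_rep h f w m) + cnj c * fock_inner h w (\<lambda>m. pi_rep h f u m + c * pi_rep h f w m)"
      using fock_add1[OF u fcw fin_add[OF fpu fin_scale[OF fpw]]] fock_scale1[OF fin_add[OF fpu fin_scale[OF fpw]]] by simp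
    moreover have "fock_inner h a (\<lambda>m. pi_rep h f u m + c * pi_rep h f w m) = ?Q a u + c * ?Q a w" if "fin a" for a
      using fock_add2[OF that fpu fin_scale[OF fpw]] fock_scale2[OF that] by simp
    ultimately show ?thesis using u w by (simp add: algebra_simps)
  qed
  have z: "?Q (\<lambda>m. u m + c * w m) (\<lambda>m. u m + c * w m) = 0" for c
    using Z[OF fin_add[OF u fin_scale[OF w]] degk_add[OF du dw]] .
  have quu: "?Q u u = 0" using Z[OF u du] .
  have qww: "?Q w w = 0" using Z[OF w dw] .
  have e1: "?Q u w + ?Q w u = 0" using expand[of 1] z[of 1] quu qww by simp
  have e2: "\<i> * ?Q u w - \<i> * ?Q w u = 0" using expand[of "\<i>"] z[of "\<i>"] quu qww by simp
  from e1 e2 show ?thesis by (simp add: algebra_simps)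
qed

definition kills :: "real \<Rightarrow> nat \<Rightarrow> 'i::finite cpoly \<Rightarrow> bool" where
  "kills h k f \<longleftrightarrow> (\<forall>N. deg N = k \<longrightarrow> pi_rep h f (delta N) = (\<lambda>_. 0))"

lemma degk_delta: "deg N = k \<Longrightarrow> degk k (delta N)"
  by (simp add: degk_def delta_def)

lemma fock_delta: "fock_inner h (delta A) w = w A * fw h A"
proof -
  have "csupp (delta A) \<inter> csupp w \<subseteq> {A}" by (auto simp: csupp_delta)
  from fock_eq[OF _ this] show ?thesis by (simp add: delta_def)
qed

lemma fw_nz: "0 < h \<Longrightarrow> fw h A \<noteq> 0"
  by (simp add: fw_def mfact_nz)

lemma kills_of_K0:
  assumes h: "0 < h" and f: "f \<in> Balg"
    and K0: "\<And>\<omega>. is_state h \<omega> \<Longrightarrow> \<omega> (wick h (Jc (complex_of_real (h * real k))) (Jc (complex_of_real (h * real k)))) = 0 \<Longrightarrow> \<omega> f = 0"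
  shows "kills h k f"
  unfolding kills_def
proof (intro allI impI ext)
  fix N A :: "'a \<Rightarrow> nat" assume N: "deg N = k"
  have ff: "fin f" using f by (rule Balg_fin)
  have Z: "fock_inner h x (pi_rep h f x) = 0" if x: "fin x" "degk k x" for x
  proof (cases "\<exists>A. x A \<noteq> 0")
    case True
    then obtain A where A: "x A \<noteq> 0" by blast
    have "vs h x f = 0" by (rule K0[OF vs_state[OF h x(1) A] vs_relevant[OF h x]])
    moreover have "fock_inner h x x \<noteq> 0"
      using fock_pos[OF h x(1) A] unfolding fock_self_eq of_real_eq_0_iff by linarith
    ultimately show ?thesis unfolding vs_def by simp
  next
    case False
    then have "x = (\<lambda>_. 0)" by auto
    then show ?thesis by (simp add: fock_zero1)
  qed
  show "pi_rep h f (delta N) A = 0"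
  proof (cases "deg A = k")
    case True
    have "fock_inner h (delta A) (pi_rep h f (delta N)) = 0"
      by (rule polarize[OF ff fin_delta fin_delta Z degk_delta[OF True] degk_delta[OF N]])
    then show ?thesis unfolding fock_delta using fw_nz[OF h, of A] by simp
  next
    case False
    then show ?thesis using pi_Balg_deg[OF f degk_delta[OF N], of h] unfolding degk_def by auto
  qed
qed

definition mulJ :: "'i::finite cpoly \<Rightarrow> 'i cpoly" where
  "mulJ f = (\<lambda>(A, B). \<Sum>i\<in>UNIV. if 1 \<le> A i \<and> 1 \<le> B i then f ((\<lambda>j. A j - ev i j), (\<lambda>j. B j - ev i j)) else 0)"

lemma shift_iff: "(1 \<le> A i \<and> (\<lambda>j. A j - ev i j) = K) \<longleftrightarrow> (\<lambda>j. K j + ev i j) = A"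
proof
  assume a: "1 \<le> A i \<and> (\<lambda>j. A j - ev i j) = K"
  show "(\<lambda>j. K j + ev i j) = A"
  proof (rule ext)
    fix j show "K j + ev i j = A j" using a by (cases "j = i") (auto simp: ev_def)
  qed
next
  assume a: "(\<lambda>j. K j + ev i j) = A"
  then have "A i = K i + 1" by (auto simp: ev_def)
  moreover have "(\<lambda>j. A j - ev i j) = K" using a by (auto simp: ev_def)
  ultimately show "1 \<le> A i \<and> (\<lambda>j. A j - ev i j) = K" by simp
qed

lemma mulJ_mono: "mulJ (mono (K, L)) = mJ K L"
proof (rule ext, clarify)
  fix A B :: "'a \<Rightarrow> nat"
  show "mulJ (mono (K, L)) (A, B) = mJ K L (A, B)"
    unfolding mulJ_def mJ_def
  proof (simp only: case_prod_conv, intro sum.cong refl)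
    fix i
    have iff: "(1 \<le> A i \<and> 1 \<le> B i \<and> K = (\<lambda>j. A j - ev i j) \<and> L = (\<lambda>j. B j - ev i j)) \<longleftrightarrow>
          ((\<lambda>l. K l + ev i l) = A \<and> (\<lambda>l. L l + ev i l) = B)"
      using shift_iff[of A i K] shift_iff[of B i L] by (metis (no_types, lifting))
    have "(if 1 \<le> A i \<and> 1 \<le> B i then mono (K, L) ((\<lambda>j. A j - ev i j), (\<lambda>j. B j - ev i j)) else 0) =
      (if 1 \<le> A i \<and> 1 \<le> B i \<and> K = (\<lambda>j. A j - ev i j) \<and> L = (\<lambda>j. B j - ev i j) then 1 else 0)"
      unfolding mono_app by simp
    also have "\<dots> = mono ((\<lambda>l. K l + ev i l), (\<lambda>l. L l + ev i l)) (A, B)"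
      unfolding mono_app iff ..
    finally show "(if 1 \<le> A i \<and> 1 \<le> B i then mono (K, L) ((\<lambda>j. A j - ev i j), (\<lambda>j. B j - ev i j)) else 0) =
       mono ((\<lambda>l. K l + ev i l), (\<lambda>l. L l + ev i l)) (A, B)" .
  qed
qed

lemma if_sum: "(if P then sum g S else 0) = (\<Sum>p\<in>S. if P then g p else 0)"
  by (cases P) simp_all

lemma wick_decomp1:
  assumes f: "fin f" and g: "fin g"
  shows "wick h f g x = (\<Sum>p\<in>csupp f. f p * wick h (mono p) g x)"
proof -
  obtain A B where x: "x = (A, B)" by (cases x)
  have "wick h (mono p) g (A, B) = (\<Sum>(K', L')\<in>csupp g. g (K', L') * wk h (fst p) (snd p) K' L' A B)" for p
  proof -
    have "wick h (mono p) g (A, B) = (\<Sum>(K, L)\<in>{p}. \<Sum>(K', L')\<in>csupp g. mono p (K, L) * g (K', L') * wk h K L K' L' A B)"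
      by (rule wick_eq) (auto simp: csupp_mono g)
    then show ?thesis by (simp add: mono_def split_def)
  qed
  then show ?thesis unfolding x wick_eq[OF f order_refl g order_refl]
    by (simp add: split_def sum_distrib_left mult_ac)
qed

lemma mulJ_decomp:
  assumes f: "fin f"
  shows "mulJ f x = (\<Sum>p\<in>csupp f. f p * mJ (fst p) (snd p) x)"
proof -
  obtain A B where x: "x = (A, B)" by (cases x)
  have fd: "f = (\<lambda>m. \<Sum>p\<in>csupp f. f p * mono p m)" by (rule mono_decomp[OF f])
  have "mulJ f (A, B) = (\<Sum>i\<in>UNIV. \<Sum>p\<in>csupp f. f p * (if 1 \<le> A i \<and> 1 \<le> B i then mono p ((\<lambda>j. A j - ev i j), (\<lambda>j. B j - ev i j)) else 0))"
    unfolding mulJ_def case_prod_conv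
    by (subst fd) (simp only: if_sum mult_zero_right if_distrib[of "\<lambda>x. _ * x"])
  also have "\<dots> = (\<Sum>p\<in>csupp f. f p * (\<Sum>i\<in>UNIV. if 1 \<le> A i \<and> 1 \<le> B i then mono p ((\<lambda>j. A j - ev i j), (\<lambda>j. B j - ev i j)) else 0))"
    by (subst sum.swap) (simp add: sum_distrib_left)
  also have "\<dots> = (\<Sum>p\<in>csupp f. f p * mulJ (mono p) (A, B))"
    unfolding mulJ_def by simp
  also have "\<dots> = (\<Sum>p\<in>csupp f. f p * mJ (fst p) (snd p) (A, B))"
    by (intro sum.cong refl) (metis mulJ_mono prod.collapse)
  finally show ?thesis unfolding x .
qed

lemma wick_Jc_hom:
  assumes f: "fin f" and hom: "\<And>K L. f (K, L) \<noteq> 0 \<Longrightarrow> deg L = m"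
  shows "wick h f (Jc c) = (\<lambda>x. mulJ f x + (complex_of_real (h * real m) - c) * f x)"
proof (rule ext)
  fix x
  have "wick h f (Jc c) x = (\<Sum>p\<in>csupp f. f p * wick h (mono p) (Jc c) x)"
    by (rule wick_decomp1[OF f fin_Jc])
  also have "\<dots> = (\<Sum>p\<in>csupp f. f p * mJ (fst p) (snd p) x + (complex_of_real (h * real m) - c) * (f p * mono p x))"
  proof (intro sum.cong refl)
    fix p assume p: "p \<in> csupp f"
    obtain K L where pKL: "p = (K, L)" by (cases p)
    have "deg L = m" using p hom unfolding pKL csupp_def by auto
    then show "f p * wick h (mono p) (Jc c) x = f p * mJ (fst p) (snd p) x + (complex_of_real (h * real m) - c) * (f p * mono p x)"
      unfolding pKL wick_mono_Jc by (simp add: algebra_simps)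
  qed
  also have "\<dots> = mulJ f x + (complex_of_real (h * real m) - c) * f x"
    by (subst (3) mono_decomp[OF f]) (simp add: sum.distrib mulJ_decomp[OF f] sum_distrib_left)
  finally show "wick h f (Jc c) x = mulJ f x + (complex_of_real (h * real m) - c) * f x" .
qed

lemma fin_mulJ: "fin f \<Longrightarrow> fin (mulJ f)"
proof -
  assume f: "fin f"
  have "csupp (mulJ f) \<subseteq> (\<Union>i. (\<lambda>(K, L). ((\<lambda>j. K j + ev i j), (\<lambda>j. L j + ev i j))) ` csupp f)"
  proof
    fix x assume "x \<in> csupp (mulJ f)"
    then obtain A B where x: "x = (A, B)" and nz: "mulJ f (A, B) \<noteq> 0" by (cases x) (auto simp: csupp_def)
    then obtain i where i: "1 \<le> A i" "1 \<le> B i" "f ((\<lambda>j. A j - ev i j), (\<lambda>j. B j - ev i j)) \<noteq> 0"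
      unfolding mulJ_def by (auto dest!: sum_nz_ex split: if_splits)
    have "(\<lambda>j. (A j - ev i j) + ev i j) = A" "(\<lambda>j. (B j - ev i j) + ev i j) = B"
      using shift_iff[of A i "\<lambda>j. A j - ev i j"] shift_iff[of B i "\<lambda>j. B j - ev i j"] i by auto
    then have "x = (\<lambda>(K, L). ((\<lambda>j. K j + ev i j), (\<lambda>j. L j + ev i j))) ((\<lambda>j. A j - ev i j), (\<lambda>j. B j - ev i j))"
      using x by simp
    moreover have "((\<lambda>j. A j - ev i j), (\<lambda>j. B j - ev i j)) \<in> csupp f" using i(3) by (simp add: csupp_def)
    ultimately show "x \<in> (\<Union>i. (\<lambda>(K, L). ((\<lambda>j. K j + ev i j), (\<lambda>j. L j + ev i j))) ` csupp f)"
      by blast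
  qed
  moreover have "finite (\<Union>i. (\<lambda>(K, L). ((\<lambda>j. K j + ev i j), (\<lambda>j. L j + ev i j))) ` csupp f)"
    using f by auto
  ultimately show ?thesis by (rule finite_subset)
qed

section \<open>Powers of J\<close>

primrec rr :: "nat \<Rightarrow> 'i::finite cpoly" where
  "rr 0 = one_p"
| "rr (Suc m) = mulJ (rr m)"

definition rprop :: "nat \<Rightarrow> 'i::finite cpoly \<Rightarrow> bool" where
  "rprop m f \<longleftrightarrow> fin f \<and> (\<forall>K L. f (K, L) \<noteq> 0 \<longrightarrow> K = L \<and> deg K = m) \<and>
      (\<forall>A. deg A = m \<longrightarrow> Im (f (A, A)) = 0 \<and> 0 < Re (f (A, A)))"

lemma ev_le: "1 \<le> A i \<Longrightarrow> ev i \<le> A" by (auto simp: le_fun_def ev_def)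

lemma deg_shift: "1 \<le> A i \<Longrightarrow> deg (\<lambda>j. A j - ev i j) = deg A - 1"
  using deg_sub[OF ev_le[where A=A and i=i]] by (simp add: deg_ev)

lemma rprop_rr: "rprop m (rr m)"
proof (induction m)
  case 0
  have "one_p (K, L) \<noteq> 0 \<Longrightarrow> K = L \<and> deg K = 0" for K L :: "'a \<Rightarrow> nat"
    by (auto simp: one_p_def deg_zero split: if_splits)
  moreover have "deg A = 0 \<Longrightarrow> Im (one_p (A, A)) = 0 \<and> 0 < Re (one_p (A, A))" for A :: "'a \<Rightarrow> nat"
    by (auto simp: one_p_def deg_zero_iff)
  ultimately show ?case by (simp add: rprop_def fin_one)
next
  case (Suc m)
  let ?f = "rr m :: 'a cpoly"
  have f: "fin ?f" using Suc unfolding rprop_def by blast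
  have sup: "\<And>K L. ?f (K, L) \<noteq> 0 \<Longrightarrow> K = L \<and> deg K = m" using Suc unfolding rprop_def by blast
  have pos: "\<And>A. deg A = m \<Longrightarrow> Im (?f (A, A)) = 0 \<and> 0 < Re (?f (A, A))" using Suc unfolding rprop_def by blast
  have "fin (mulJ ?f)" by (rule fin_mulJ[OF f])
  moreover have "K = L \<and> deg K = Suc m" if nz: "mulJ ?f (K, L) \<noteq> 0" for K L
  proof -
    obtain i where i: "1 \<le> K i" "1 \<le> L i" "?f ((\<lambda>j. K j - ev i j), (\<lambda>j. L j - ev i j)) \<noteq> 0"
      using nz unfolding mulJ_def by (auto dest!: sum_nz_ex split: if_splits)
    from sup[OF i(3)] have e: "(\<lambda>j. K j - ev i j) = (\<lambda>j. L j - ev i j)" and d: "deg (\<lambda>j. K j - ev i j) = m" by auto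
    have "K = (\<lambda>j. (K j - ev i j) + ev i j)" "L = (\<lambda>j. (L j - ev i j) + ev i j)"
      using shift_iff[of K i "\<lambda>j. K j - ev i j"] shift_iff[of L i "\<lambda>j. L j - ev i j"] i by auto
    then have "K = L" using e by metis
    moreover have "deg K = Suc m" using d deg_shift[where A=K and i=i, OF i(1)] deg_mono[OF ev_le[where A=K and i=i, OF i(1)]] by (simp add: deg_ev)
    ultimately show ?thesis by simp
  qed
  moreover have "Im (mulJ ?f (A, A)) = 0 \<and> 0 < Re (mulJ ?f (A, A))" if d: "deg A = Suc m" for A
  proof -
    have t: "Im (if 1 \<le> A i \<and> 1 \<le> A i then ?f ((\<lambda>j. A j - ev i j), (\<lambda>j. A j - ev i j)) else 0) = 0 \<and>
             0 \<le> Re (if 1 \<le> A i \<and> 1 \<le> A i then ?f ((\<lambda>j. A j - ev i j), (\<lambda>j. A j - ev i j)) else 0)" for i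
    proof (cases "1 \<le> A i")
      case True
      have "deg (\<lambda>j. A j - ev i j) = m" using deg_shift[where A=A and i=i, OF True] d by simp
      then show ?thesis using pos True by (simp add: less_imp_le)
    qed simp
    have "A \<noteq> (\<lambda>_. 0)" using d deg_zero_iff[of A] by auto
    then obtain i where i: "A i \<noteq> 0" by (auto simp: fun_eq_iff)
    then have i1: "1 \<le> A i" by simp
    have di: "deg (\<lambda>j. A j - ev i j) = m" using deg_shift[where A=A and i=i, OF i1] d by simp
    have "0 < Re (if 1 \<le> A i \<and> 1 \<le> A i then ?f ((\<lambda>j. A j - ev i j), (\<lambda>j. A j - ev i j)) else 0)"
      using pos[OF di] i1 by simp
    then have "0 < (\<Sum>i\<in>UNIV. Re (if 1 \<le> A i \<and> 1 \<le> A i then ?f ((\<lambda>j. A j - ev i j), (\<lambda>j. A j - ev i j)) else 0))"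
      by (intro sum_pos2[where i=i]) (use t in auto)
    then show ?thesis unfolding mulJ_def case_prod_conv Re_sum Im_sum using t by simp
  qed
  ultimately show ?case unfolding rprop_def rr.simps by blast
qed

lemma rr_Balg: "rr m \<in> Balg"
  using rprop_rr[of m] unfolding rprop_def by (auto intro!: BalgI)

lemma rr_Suc: "rr (Suc m) = (\<lambda>x. wick h (rr m) (Jc c) x - (complex_of_real (h * real m) - c) * rr m x)"
proof -
  have "wick h (rr m) (Jc c) = (\<lambda>x. mulJ (rr m) x + (complex_of_real (h * real m) - c) * rr m x)"
    using rprop_rr[of m] unfolding rprop_def by (intro wick_Jc_hom) auto
  note e = this
  show ?thesis
  proof (rule ext)
    fix x
    have "wick h (rr m) (Jc c) x = mulJ (rr m) x + (complex_of_real (h * real m) - c) * rr m x"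
      using fun_cong[OF e, of x] by simp
    then show "rr (Suc m) x = wick h (rr m) (Jc c) x - (complex_of_real (h * real m) - c) * rr m x"
      by simp
  qed
qed

section \<open>Relevant states kill the high-degree part\<close>

definition relevant :: "real \<Rightarrow> nat \<Rightarrow> ('i::finite cpoly \<Rightarrow> complex) \<Rightarrow> bool" where
  "relevant h k \<omega> \<longleftrightarrow> is_state h \<omega> \<and>
     \<omega> (wick h (Jc (complex_of_real (h * real k))) (Jc (complex_of_real (h * real k)))) = 0"

lemma rel_wickJc:
  assumes h: "0 < h" and r: "relevant h k \<omega>" and x: "x \<in> Balg"
  shows "\<omega> (wick h x (Jc (complex_of_real (h * real k)))) = 0"
proof -
  have st: "is_state h \<omega>" using r by (simp add: relevant_def)
  have zz: "\<omega> (wick h (cstar (Jc (complex_of_real (h * real k)))) (Jc (complex_of_real (h * real k)))) = 0"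
    using r unfolding relevant_def cstar_Jc by blast
  from cauchy_schwarz_zero[OF h st Balg_cstar[OF x] Jc_Balg zz] show ?thesis by (simp add: cstar_cstar)
qed

lemma rel_rr:
  assumes h: "0 < h" and r: "relevant h k \<omega>"
  shows "k < m \<Longrightarrow> \<omega> (rr m) = 0"
proof (induction m)
  case 0 then show ?case by simp
next
  case (Suc m)
  have st: "is_state h \<omega>" using r by (simp add: relevant_def)
  let ?c = "complex_of_real (h * real m) - complex_of_real (h * real k)"
  have "\<omega> (rr (Suc m)) = \<omega> (\<lambda>x. wick h (rr m) (Jc (complex_of_real (h * real k))) x - ?c * rr m x)"
    by (subst rr_Suc[where h = h and c = "complex_of_real (h * real k)"]) (rule refl)
  also have "\<dots> = \<omega> (wick h (rr m) (Jc (complex_of_real (h * real k)))) - ?c * \<omega> (rr m)"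
    using st_diff[OF st Balg_wick[OF rr_Balg Jc_Balg] Balg_scale[OF rr_Balg]] st_scale[OF st rr_Balg] by simp
  also have "\<dots> = - ?c * \<omega> (rr m)"
  proof -
    have z: "\<omega> (wick h (rr m) (Jc (complex_of_real (h * real k)))) = 0" by (rule rel_wickJc[OF h r rr_Balg])
    show ?thesis by (simp only: z) (simp add: algebra_simps)
  qed
  also have "\<dots> = 0"
  proof (cases "m = k")
    case True then show ?thesis by simp
  next
    case False then have "k < m" using Suc.prems by simp
    then show ?thesis using Suc.IH by simp
  qed
  finally show ?case .
qed

lemma mono_fac: "mono (K, L) = wick h (mono (K, (\<lambda>_. 0))) (mono ((\<lambda>_. 0), L))"
proof (rule ext, clarify)
  fix A B :: "'a \<Rightarrow> nat"
  have S: "{M :: 'a \<Rightarrow> nat. M \<le> (\<lambda>_. 0) \<and> M \<le> (\<lambda>_. 0)} = {(\<lambda>_. 0)}" by (auto simp: le_fun_def fun_eq_iff)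
  have e: "(\<lambda>j. K j + 0 - 0) = K" "(\<lambda>j. (0::nat) - 0 + L j) = L" by simp_all
  show "mono (K, L) (A, B) = wick h (mono (K, (\<lambda>_. 0))) (mono ((\<lambda>_. 0), L)) (A, B)"
    unfolding wick_mono_mono wk_def S sum_single e wcoef_zero mono_app by simp
qed

lemma fac:
  assumes v: "fin v"
  shows "fock_inner h v (pi_rep h (mono (K, L)) v) =
     fock_inner h (pi_rep h (mono ((\<lambda>_. 0), K)) v) (pi_rep h (mono ((\<lambda>_. 0), L)) v)"
proof -
  have "pi_rep h (mono (K, L)) v = pi_rep h (mono (K, (\<lambda>_. 0))) (pi_rep h (mono ((\<lambda>_. 0), L)) v)"
    by (subst mono_fac[where h = h]) (rule pi_wick[OF fin_mono fin_mono v])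
  moreover have "fock_inner h v (pi_rep h (mono (K, (\<lambda>_. 0))) (pi_rep h (mono ((\<lambda>_. 0), L)) v)) =
      fock_inner h (pi_rep h (cstar (mono (K, (\<lambda>_. 0)))) v) (pi_rep h (mono ((\<lambda>_. 0), L)) v)"
    by (rule fock_pi_adj) (simp_all add: fin_mono fin_pi_rep v)
  ultimately show ?thesis by (simp add: cstar_mono)
qed

lemma mono_diag_pos:
  assumes h: "0 < h"
  shows "mono (A, A) \<in> pos_cone h"
  unfolding pos_cone_def
proof (intro CollectI conjI allI impI)
  show "mono (A, A) \<in> Balg" by (rule mono_Balg) simp
  show "cstar (mono (A, A)) = mono (A, A)" by (simp add: cstar_mono)
  fix g :: "'a fock" assume g: "fin g"
  show "Im (fock_inner h g (pi_rep h (mono (A, A)) g)) = 0" "0 \<le> Re (fock_inner h g (pi_rep h (mono (A, A)) g))"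
    unfolding fac[OF g] using fock_self[of h "pi_rep h (mono ((\<lambda>_. 0), A)) g"] h by auto
qed

lemma rel_diag:
  assumes h: "0 < h" and r: "relevant h k \<omega>" and km: "k < deg A"
  shows "\<omega> (mono (A, A)) = 0"
proof -
  define m where "m = deg A"
  have st: "is_state h \<omega>" using r by (simp add: relevant_def)
  let ?f = "rr m :: 'a cpoly"
  have rp: "rprop m ?f" by (rule rprop_rr)
  have f: "fin ?f" using rp by (simp add: rprop_def)
  have sup: "\<And>K L. ?f (K, L) \<noteq> 0 \<Longrightarrow> K = L \<and> deg K = m" using rp unfolding rprop_def by blast
  have pos: "\<And>A. deg A = m \<Longrightarrow> Im (?f (A, A)) = 0 \<and> 0 < Re (?f (A, A))" using rp unfolding rprop_def by blast
  have pB: "mono p \<in> Balg" if "p \<in> csupp ?f" for p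
  proof -
    obtain K L where "p = (K, L)" by (cases p)
    then show ?thesis using that sup by (auto simp: csupp_def intro: mono_Balg)
  qed
  have "0 = \<omega> ?f" using rel_rr[OF h r] km unfolding m_def by simp
  also have "\<dots> = \<omega> (\<lambda>x. \<Sum>p\<in>csupp ?f. ?f p * mono p x)" by (subst mono_decomp[OF f]) (rule refl)
  also have "\<dots> = (\<Sum>p\<in>csupp ?f. ?f p * \<omega> (mono p))"
    using st_sum[OF st f, of "\<lambda>p x. ?f p * mono p x"] st_scale[OF st pB] Balg_scale[OF pB] by simp
  finally have s0: "(\<Sum>p\<in>csupp ?f. ?f p * \<omega> (mono p)) = 0" by simp
  have trm: "Im (?f p * \<omega> (mono p)) = 0 \<and> Re (?f p * \<omega> (mono p)) = Re (?f p) * Re (\<omega> (mono p)) \<and>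
              0 \<le> Re (?f p * \<omega> (mono p))" if p: "p \<in> csupp ?f" for p
  proof -
    obtain K L where pKL: "p = (K, L)" by (cases p)
    then have KL: "K = L" "deg K = m" using p sup by (auto simp: csupp_def)
    have a: "Im (?f p) = 0" "0 < Re (?f p)" using pos[OF KL(2)] unfolding pKL KL(1) by auto
    have b: "Im (\<omega> (mono p)) = 0" "0 \<le> Re (\<omega> (mono p))"
      using st_pos[OF st mono_diag_pos[OF h, of L]] unfolding pKL KL(1) by auto
    show ?thesis using a b by simp
  qed
  have "(\<Sum>p\<in>csupp ?f. Re (?f p * \<omega> (mono p))) = 0" using arg_cong[OF s0, of Re] by (simp only: Re_sum zero_complex.sel(1))
  moreover have "\<forall>p\<in>csupp ?f. 0 \<le> Re (?f p * \<omega> (mono p))"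
  proof
    fix p assume p: "p \<in> csupp ?f"
    from trm[OF p] show "0 \<le> Re (?f p * \<omega> (mono p))" by (elim conjE)
  qed
  ultimately have z: "\<forall>p\<in>csupp ?f. Re (?f p * \<omega> (mono p)) = 0"
    by (subst sum_nonneg_eq_0_iff[OF f, symmetric]) simp_all
  have Ain: "(A, A) \<in> csupp ?f" using pos[of A] unfolding m_def csupp_def by auto
  have "Re (?f (A, A)) * Re (\<omega> (mono (A, A))) = 0" using z[rule_format, OF Ain] trm[OF Ain] by simp
  then have "Re (\<omega> (mono (A, A))) = 0" using pos[of A] unfolding m_def by simp
  moreover have "Im (\<omega> (mono (A, A))) = 0" using st_pos[OF st mono_diag_pos[OF h]] by blast
  ultimately show ?thesis by (simp add: complex_eq_iff)
qed

lemma fock_expand: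
  assumes a: "fin a" and b: "fin b"
  shows "fock_inner h (\<lambda>x. a x + t * b x) (\<lambda>x. a x + t * b x) =
    fock_inner h a a + t * fock_inner h a b + cnj t * fock_inner h b a + cnj t * t * fock_inner h b b"
proof -
  have ftb: "fin (\<lambda>x. t * b x)" using b by (rule fin_scale)
  have fab: "fin (\<lambda>x. a x + t * b x)" using a ftb by (rule fin_add)
  have "fock_inner h (\<lambda>x. a x + t * b x) (\<lambda>x. a x + t * b x) =
     fock_inner h a (\<lambda>x. a x + t * b x) + cnj t * fock_inner h b (\<lambda>x. a x + t * b x)"
    by (simp only: fock_add1[OF a ftb fab] fock_scale1[OF fab])
  also have "\<dots> = (fock_inner h a a + t * fock_inner h a b) + cnj t * (fock_inner h b a + t * fock_inner h b b)"
    by (simp only: fock_add2[OF a a ftb] fock_add2[OF b a ftb] fock_scale2[OF a] fock_scale2[OF b])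
  finally show ?thesis by (simp add: algebra_simps)
qed

lemma pi_fock4:
  assumes g: "fin g"
  shows "fock_inner h g (pi_rep h (\<lambda>m. (mono p1 m + mono p2 m) + (t * mono p3 m + s * mono p4 m)) g) =
    (fock_inner h g (pi_rep h (mono p1) g) + fock_inner h g (pi_rep h (mono p2) g)) +
    (t * fock_inner h g (pi_rep h (mono p3) g) + s * fock_inner h g (pi_rep h (mono p4) g))"
proof -
  have fm: "fin (pi_rep h (mono p) g)" for p using g by (intro fin_pi_rep fin_mono)
  have "pi_rep h (\<lambda>m. (mono p1 m + mono p2 m) + (t * mono p3 m + s * mono p4 m)) g =
     (\<lambda>x. (pi_rep h (mono p1) g x + pi_rep h (mono p2) g x) + (t * pi_rep h (mono p3) g x + s * pi_rep h (mono p4) g x))"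
    by (simp only: pi_add1[OF fin_add[OF fin_mono fin_mono] fin_add[OF fin_scale[OF fin_mono] fin_scale[OF fin_mono]] g]
        pi_add1[OF fin_mono fin_mono g] pi_add1[OF fin_scale[OF fin_mono] fin_scale[OF fin_mono] g]
        pi_scale1[OF fin_mono g])
  then show ?thesis
    by (simp only: fock_add2[OF g fin_add[OF fm fm] fin_add[OF fin_scale[OF fm] fin_scale[OF fm]]]
        fock_add2[OF g fm fm] fock_add2[OF g fin_scale[OF fm] fin_scale[OF fm]] fock_scale2[OF g])
qed

lemma rel_off:
  assumes h: "0 < h" and r: "relevant h k \<omega>" and km: "k < deg K" and d: "deg K = deg L"
  shows "\<omega> (mono (K, L)) = 0"
proof -
  have st: "is_state h \<omega>" using r by (simp add: relevant_def)
  have B: "mono (K, K) \<in> Balg" "mono (L, L) \<in> Balg" "mono (K, L) \<in> Balg" "mono (L, K) \<in> Balg"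
    using d by (auto intro: mono_Balg)
  define e where "e = (\<lambda>t m. (mono (K, K) m + mono (L, L) m) + (t * mono (K, L) m + cnj t * mono (L, K) m))"
  have eB: "e t \<in> Balg" for t unfolding e_def using B by (intro Balg_add Balg_scale)
  have ew: "\<omega> (e t) = t * \<omega> (mono (K, L)) + cnj t * \<omega> (mono (L, K))" for t
  proof -
    have "\<omega> (e t) = (\<omega> (mono (K, K)) + \<omega> (mono (L, L))) + (t * \<omega> (mono (K, L)) + cnj t * \<omega> (mono (L, K)))"
      unfolding e_def
      using st_add[OF st Balg_add[OF B(1,2)] Balg_add[OF Balg_scale[OF B(3)] Balg_scale[OF B(4)]]]
        st_add[OF st B(1,2)] st_add[OF st Balg_scale[OF B(3)] Balg_scale[OF B(4)]]
        st_scale[OF st B(3)] st_scale[OF st B(4)] by simp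
    moreover have "\<omega> (mono (K, K)) = 0" using rel_diag[OF h r km] .
    moreover have "\<omega> (mono (L, L)) = 0" using rel_diag[OF h r] km d by simp
    ultimately show ?thesis by simp
  qed
  have epos: "e t \<in> pos_cone h" if t: "cnj t * t = 1" for t
    unfolding pos_cone_def
  proof (intro CollectI conjI allI impI)
    show "e t \<in> Balg" by (rule eB)
    show "cstar (e t) = e t"
      unfolding e_def cstar_add cstar_scale cstar_mono by (simp add: algebra_simps)
    fix g :: "'a fock" assume g: "fin g"
    let ?a = "pi_rep h (mono ((\<lambda>_. 0), K)) g" and ?b = "pi_rep h (mono ((\<lambda>_. 0), L)) g"
    have fa: "fin ?a" and fb: "fin ?b" using g by (auto intro: fin_pi_rep fin_mono)
    have "fock_inner h g (pi_rep h (e t) g) =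
       (fock_inner h ?a ?a + fock_inner h ?b ?b) + (t * fock_inner h ?a ?b + cnj t * fock_inner h ?b ?a)"
      unfolding e_def pi_fock4[OF g] fac[OF g] ..
    also have "\<dots> = fock_inner h (\<lambda>x. ?a x + t * ?b x) (\<lambda>x. ?a x + t * ?b x)"
      unfolding fock_expand[OF fa fb] t by (simp add: algebra_simps)
    finally show "Im (fock_inner h g (pi_rep h (e t) g)) = 0" "0 \<le> Re (fock_inner h g (pi_rep h (e t) g))"
      using fock_self[of h "\<lambda>x. ?a x + t * ?b x"] h by auto
  qed
  let ?x = "\<omega> (mono (K, L))" and ?y = "\<omega> (mono (L, K))"
  have p1: "Im (?x + ?y) = 0 \<and> 0 \<le> Re (?x + ?y)" using st_pos[OF st epos[of 1]] ew[of 1] by simp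
  have p2: "0 \<le> Re (- ?x - ?y)" using st_pos[OF st epos[of "-1"]] ew[of "-1"] by simp
  have p3: "Im (\<i> * ?x - \<i> * ?y) = 0 \<and> 0 \<le> Re (\<i> * ?x - \<i> * ?y)" using st_pos[OF st epos[of "\<i>"]] ew[of "\<i>"] by simp
  have p4: "0 \<le> Re (- \<i> * ?x + \<i> * ?y)" using st_pos[OF st epos[of "- \<i>"]] ew[of "- \<i>"] by simp
  from p1 p2 p3 p4 show ?thesis by (simp add: complex_eq_iff)
qed

section \<open>The kernel of the degree-k representation\<close>

lemma pi_zero_f: "pi_rep h (\<lambda>_. 0) v = (\<lambda>_. 0)"
  by (simp add: pi_rep_def csupp_def fun_eq_iff)

lemma kills_zero: "kills h k (\<lambda>_. 0)"
  by (simp add: kills_def pi_zero_f)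

lemma kills_add: "fin f \<Longrightarrow> fin g \<Longrightarrow> kills h k f \<Longrightarrow> kills h k g \<Longrightarrow> kills h k (\<lambda>m. f m + g m)"
  by (simp add: kills_def pi_add1 fin_delta)

lemma kills_scale: "fin f \<Longrightarrow> kills h k f \<Longrightarrow> kills h k (\<lambda>m. c * f m)"
  by (simp add: kills_def pi_scale1 fin_delta)

lemma pi_delta: "fin f \<Longrightarrow> pi_rep h f (delta N) A = (\<Sum>p\<in>csupp f. f p * pk h (fst p) (snd p) N A)"
proof -
  assume f: "fin f"
  have "pi_rep h f (delta N) A = (\<Sum>(K, L)\<in>csupp f. \<Sum>M\<in>{N}. f (K, L) * delta N M * pk h K L M A)"
    by (rule pi_rep_eq[OF f order_refl]) (auto simp: csupp_delta)
  then show ?thesis by (simp add: delta_def split_def)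
qed

lemma kills_Jc: "kills h k (Jc (complex_of_real (h * real k)))"
  unfolding kills_def
proof (intro allI impI)
  fix N :: "'a \<Rightarrow> nat" assume N: "deg N = k"
  show "pi_rep h (Jc (complex_of_real (h * real k))) (delta N) = (\<lambda>_. 0)"
    unfolding pi_Jc[OF fin_delta]
  proof (rule ext)
    fix A show "(complex_of_real (h * real (deg A)) - complex_of_real (h * real k)) * delta N A = 0"
      using N by (cases "A = N") (simp_all add: delta_def)
  qed
qed

lemma kills_wickJc: "x \<in> Balg \<Longrightarrow> kills h k (wick h x (Jc (complex_of_real (h * real k))))"
  unfolding kills_def
proof (intro allI impI)
  fix N :: "'a \<Rightarrow> nat" assume x: "x \<in> Balg" and N: "deg N = k"
  have z: "pi_rep h (Jc (complex_of_real (h * real k))) (delta N) = (\<lambda>_. 0)"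
    using kills_Jc[of h k] N unfolding kills_def by blast
  show "pi_rep h (wick h x (Jc (complex_of_real (h * real k)))) (delta N) = (\<lambda>_. 0)"
    by (simp only: pi_wick[OF Balg_fin[OF x] fin_Jc fin_delta] z pi_zero_vec)
qed

lemma kills_high:
  assumes "k < deg L"
  shows "kills h k (mono (K, L))"
  unfolding kills_def
proof (intro allI impI ext)
  fix N A :: "'a \<Rightarrow> nat" assume N: "deg N = k"
  have "\<not> L \<le> N" using deg_mono[of L N] N assms by auto
  then show "pi_rep h (mono (K, L)) (delta N) A = 0"
    unfolding pi_delta[OF fin_mono] csupp_mono by (simp add: pk_def)
qed

lemma kills_Pkk_zero:
  assumes h: "0 < h" and g: "g \<in> Pkl k k" and kg: "kills h k g"
  shows "g = (\<lambda>_. 0)"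
proof (rule ext, clarify)
  fix A N :: "'a \<Rightarrow> nat"
  have fg: "fin g" using g by (simp add: Pkl_def)
  have sup: "deg K = k \<and> deg L = k" if "g (K, L) \<noteq> 0" for K L
    using g that by (auto simp: Pkl_def csupp_def)
  show "g (A, N) = 0"
  proof (cases "deg N = k")
    case False then show ?thesis using sup by blast
  next
    case True
    have "pi_rep h g (delta N) A = 0" using kg True by (simp add: kills_def)
    moreover have "pi_rep h g (delta N) A = g (A, N) * complex_of_real (h ^ deg N * (mfact N / mfact (\<lambda>j. N j - N j)))"
    proof -
      have "pi_rep h g (delta N) A = (\<Sum>p\<in>csupp g. if p = (A, N) then g p * complex_of_real (h ^ deg N * (mfact N / mfact (\<lambda>j. N j - N j))) else 0)"
        unfolding pi_delta[OF fg]
      proof (intro sum.cong refl)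
        fix p assume p: "p \<in> csupp g"
        obtain K L where pKL: "p = (K, L)" by (cases p)
        have dL: "deg L = k" using sup p pKL by (auto simp: csupp_def)
        have "L \<le> N \<longleftrightarrow> L = N" using deg_le_eq[of L N] dL True by auto
        then show "g p * pk h (fst p) (snd p) N A = (if p = (A, N) then g p * complex_of_real (h ^ deg N * (mfact N / mfact (\<lambda>j. N j - N j))) else 0)"
          unfolding pKL pk_def by auto
      qed
      also have "\<dots> = g (A, N) * complex_of_real (h ^ deg N * (mfact N / mfact (\<lambda>j. N j - N j)))"
        using fg by (simp add: sum.delta') (simp add: csupp_def)
      finally show ?thesis .
    qed
    moreover have "h ^ deg N * (mfact N / mfact (\<lambda>j. N j - N j)) \<noteq> 0" using h by (simp add: mfact_nz)
    ultimately show ?thesis using h by simp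
  qed
qed

lemma Pkl_zero: "(\<lambda>_. 0) \<in> Pkl k l" by (simp add: Pkl_def csupp_def)
lemma Pkl_add: "f \<in> Pkl k l \<Longrightarrow> g \<in> Pkl k l \<Longrightarrow> (\<lambda>m. f m + g m) \<in> Pkl k l"
  unfolding Pkl_def using csupp_add[of f g] by (auto intro: finite_subset)
lemma Pkl_scale: "f \<in> Pkl k l \<Longrightarrow> (\<lambda>m. c * f m) \<in> Pkl k l"
  unfolding Pkl_def using csupp_scale[of c f] by (auto intro: finite_subset)
lemma Pkl_sum: "finite I \<Longrightarrow> (\<And>i. i \<in> I \<Longrightarrow> F i \<in> Pkl k l) \<Longrightarrow> (\<lambda>m. \<Sum>i\<in>I. F i m) \<in> Pkl k l"
  by (induction I rule: finite_induct) (auto simp: Pkl_zero intro: Pkl_add[simplified])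
lemma Pkl_mono: "deg K = k \<Longrightarrow> deg L = l \<Longrightarrow> mono (K, L) \<in> Pkl k l"
  by (auto simp: Pkl_def fin_mono csupp_mono)
lemma Pkl_Balg: "f \<in> Pkl k k \<Longrightarrow> f \<in> Balg"
  by (auto simp: Pkl_def Balg_def)

lemma reduction:
  assumes h: "0 < h"
    and T0: "(\<lambda>_. 0) \<in> T"
    and Tadd: "\<And>f g. f \<in> T \<Longrightarrow> g \<in> T \<Longrightarrow> (\<lambda>m. f m + g m) \<in> T"
    and Tscale: "\<And>c f. f \<in> T \<Longrightarrow> (\<lambda>m. c * f m) \<in> T"
    and Ti: "\<And>x. x \<in> Balg \<Longrightarrow> wick h x (Jc (complex_of_real (h * real k))) \<in> T"
    and Tii: "\<And>K L. k < deg K \<Longrightarrow> deg K = deg L \<Longrightarrow> mono (K, L) \<in> T"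
    and f: "f \<in> Balg" and kf: "kills h k f"
  shows "f \<in> T"
proof -
  define R where "R = (\<lambda>x. x \<in> T \<and> fin x \<and> kills h k x)"
  have R0: "R (\<lambda>_. 0)" unfolding R_def using T0 fin_zero kills_zero by blast
  have Radd: "R (\<lambda>m. x m + y m)" if "R x" "R y" for x y
    using that unfolding R_def by (auto intro: Tadd fin_add kills_add)
  have Rscale: "R (\<lambda>m. c * x m)" if "R x" for c x
    using that unfolding R_def by (auto intro: Tscale fin_scale kills_scale)
  have Rsum: "finite I \<Longrightarrow> (\<And>i. i \<in> I \<Longrightarrow> R (F i)) \<Longrightarrow> R (\<lambda>m. \<Sum>i\<in>I. F i m)" for I F
    by (induction I rule: finite_induct) (auto simp: R0 intro: Radd[simplified])
  have Rwick: "R (wick h x (Jc (complex_of_real (h * real k))))" if "x \<in> Balg" for x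
    unfolding R_def using Ti[OF that] kills_wickJc[OF that] fin_wick[OF Balg_fin[OF that] fin_Jc] by blast
  have Rhigh: "R (mono (K, L))" if "k < deg K" "deg K = deg L" for K L
    unfolding R_def using that by (auto intro: Tii kills_high fin_mono)
  have claim: "\<And>K L. deg K = deg L \<Longrightarrow> k - deg K = d \<Longrightarrow> \<exists>g. g \<in> Pkl k k \<and> R (\<lambda>x. mono (K, L) x - g x)" for d
  proof (induction d)
    case 0
    fix K L :: "'a \<Rightarrow> nat" assume d: "deg K = deg L" "k - deg K = 0"
    show "\<exists>g. g \<in> Pkl k k \<and> R (\<lambda>x. mono (K, L) x - g x)"
    proof (cases "deg K = k")
      case True
      have "(\<lambda>x. mono (K, L) x - mono (K, L) x) = (\<lambda>_. 0)" by simp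
      then show ?thesis using True d R0 Pkl_mono[of K k L k] by metis
    next
      case False
      then have "k < deg K" using d by simp
      then have "R (\<lambda>x. mono (K, L) x - 0)" using Rhigh d by simp
      then show ?thesis using Pkl_zero by blast
    qed
  next
    case (Suc d)
    fix K L :: "'a \<Rightarrow> nat" assume d: "deg K = deg L" "k - deg K = Suc d"
    define m where "m = deg K"
    have mk: "m < k" using d unfolding m_def by simp
    have dS: "deg (\<lambda>l. K l + ev i l) = deg (\<lambda>l. L l + ev i l)" "k - deg (\<lambda>l. K l + ev i l) = d" for i
      using d by (simp_all add: deg_add deg_ev)
    have "\<forall>i. \<exists>g. g \<in> Pkl k k \<and> R (\<lambda>x. mono ((\<lambda>l. K l + ev i l), (\<lambda>l. L l + ev i l)) x - g x)"
      using Suc.IH dS by blast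
    then obtain G where G: "\<And>i. G i \<in> Pkl k k" "\<And>i. R (\<lambda>x. mono ((\<lambda>l. K l + ev i l), (\<lambda>l. L l + ev i l)) x - G i x)"
      by metis
    define c where "c = h * (real k - real m)"
    have c0: "c \<noteq> 0" using h mk unfolding c_def by simp
    define g where "g = (\<lambda>x. complex_of_real (1 / c) * (\<Sum>i\<in>UNIV. G i x))"
    have gP: "g \<in> Pkl k k" unfolding g_def by (intro Pkl_scale Pkl_sum G) simp
    have W: "wick h (mono (K, L)) (Jc (complex_of_real (h * real k))) =
        (\<lambda>x. mJ K L x + (complex_of_real (h * real (deg L)) - complex_of_real (h * real k)) * mono (K, L) x)"
      by (rule wick_mono_Jc)
    have eq: "(\<lambda>x. mono (K, L) x - g x) = (\<lambda>x. complex_of_real (1 / c) *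
        ((\<Sum>i\<in>UNIV. (mono ((\<lambda>l. K l + ev i l), (\<lambda>l. L l + ev i l)) x - G i x)) +
         (-1) * wick h (mono (K, L)) (Jc (complex_of_real (h * real k))) x))"
    proof (rule ext)
      fix x
      have dL: "deg L = m" using d unfolding m_def by simp
      have cc: "complex_of_real (h * real (deg L)) - complex_of_real (h * real k) = - complex_of_real c"
        unfolding c_def dL by (simp add: algebra_simps)
      have c0': "complex_of_real c \<noteq> 0" using c0 by simp
      show "mono (K, L) x - g x = complex_of_real (1 / c) *
        ((\<Sum>i\<in>UNIV. (mono ((\<lambda>l. K l + ev i l), (\<lambda>l. L l + ev i l)) x - G i x)) +
         (-1) * wick h (mono (K, L)) (Jc (complex_of_real (h * real k))) x)"
        unfolding W cc g_def mJ_def sum_subtractf using c0'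
        by (simp add: field_simps of_real_divide)
    qed
    have "R (\<lambda>x. mono (K, L) x - g x)"
      unfolding eq
      by (intro Rscale Radd Rsum G(2) Rwick mono_Balg d(1)) simp
    then show "\<exists>g. g \<in> Pkl k k \<and> R (\<lambda>x. mono (K, L) x - g x)" using gP by blast
  qed
  have ff: "fin f" using f by (rule Balg_fin)
  have "\<forall>p\<in>csupp f. \<exists>g. g \<in> Pkl k k \<and> R (\<lambda>x. mono p x - g x)"
  proof
    fix p assume p: "p \<in> csupp f"
    obtain K L where pKL: "p = (K, L)" by (cases p)
    have "deg K = deg L" using p f pKL by (auto simp: csupp_def dest: BalgD)
    then show "\<exists>g. g \<in> Pkl k k \<and> R (\<lambda>x. mono p x - g x)" using claim pKL by blast
  qed
  then obtain G where G: "\<And>p. p \<in> csupp f \<Longrightarrow> G p \<in> Pkl k k" "\<And>p. p \<in> csupp f \<Longrightarrow> R (\<lambda>x. mono p x - G p x)"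
    by metis
  define Gf where "Gf = (\<lambda>x. \<Sum>p\<in>csupp f. f p * G p x)"
  have GfP: "Gf \<in> Pkl k k" unfolding Gf_def by (intro Pkl_sum Pkl_scale G ff)
  have "R (\<lambda>x. \<Sum>p\<in>csupp f. f p * (mono p x - G p x))"
    by (intro Rsum Rscale G ff)
  moreover have "(\<lambda>x. \<Sum>p\<in>csupp f. f p * (mono p x - G p x)) = (\<lambda>x. f x - Gf x)"
  proof (rule ext)
    fix x
    show "(\<Sum>p\<in>csupp f. f p * (mono p x - G p x)) = f x - Gf x"
      unfolding Gf_def by (subst (2) mono_decomp[OF ff]) (simp add: algebra_simps sum_subtractf)
  qed
  ultimately have Rd: "R (\<lambda>x. f x - Gf x)" by simp
  have "kills h k Gf"
  proof -
    have "Gf = (\<lambda>x. f x + (-1) * (f x - Gf x))" by simp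
    moreover have "kills h k (\<lambda>x. f x + (-1) * (f x - Gf x))"
      using Rd kf ff unfolding R_def by (intro kills_add kills_scale fin_scale) auto
    ultimately show ?thesis by simp
  qed
  then have "Gf = (\<lambda>_. 0)" by (rule kills_Pkk_zero[OF h GfP])
  then show ?thesis using Rd unfolding R_def by simp
qed

section \<open>Star ideals\<close>

lemma si_Balg: "is_star_ideal h I \<Longrightarrow> f \<in> I \<Longrightarrow> f \<in> Balg" by (auto simp: is_star_ideal_def)
lemma si_zero: "is_star_ideal h I \<Longrightarrow> (\<lambda>_. 0) \<in> I" by (simp add: is_star_ideal_def)
lemma si_add: "is_star_ideal h I \<Longrightarrow> f \<in> I \<Longrightarrow> g \<in> I \<Longrightarrow> (\<lambda>m. f m + g m) \<in> I" by (simp add: is_star_ideal_def)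
lemma si_scale: "is_star_ideal h I \<Longrightarrow> f \<in> I \<Longrightarrow> (\<lambda>m. c * f m) \<in> I" by (simp add: is_star_ideal_def)
lemma si_wickL: "is_star_ideal h I \<Longrightarrow> a \<in> Balg \<Longrightarrow> f \<in> I \<Longrightarrow> wick h a f \<in> I" by (simp add: is_star_ideal_def)
lemma si_wickR: "is_star_ideal h I \<Longrightarrow> a \<in> Balg \<Longrightarrow> f \<in> I \<Longrightarrow> wick h f a \<in> I" by (simp add: is_star_ideal_def)

lemma high_in_ideal:
  assumes I: "is_star_ideal h I" and P: "Pkl (Suc k) (Suc k) \<subseteq> I"
  shows "deg K = Suc k + n \<Longrightarrow> deg L = deg K \<Longrightarrow> mono (K, L) \<in> I"
proof (induction n arbitrary: K L)
  case 0
  then show ?case using P Pkl_mono[of K "Suc k" L "Suc k"] by auto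
next
  case (Suc n)
  have "K \<noteq> (\<lambda>_. 0)" using Suc.prems deg_zero_iff[of K] by auto
  then obtain i where "K i \<noteq> 0" by (auto simp: fun_eq_iff)
  then have i: "1 \<le> K i" by simp
  have "L \<noteq> (\<lambda>_. 0)" using Suc.prems deg_zero_iff[of L] by auto
  then obtain j where "L j \<noteq> 0" by (auto simp: fun_eq_iff)
  then have j: "1 \<le> L j" by simp
  define K0 where "K0 = (\<lambda>l. K l - ev i l)"
  define L0 where "L0 = (\<lambda>l. L l - ev j l)"
  have dK0: "deg K0 = Suc k + n" unfolding K0_def using deg_shift[where A=K and i=i, OF i] Suc.prems by simp
  have dL0: "deg L0 = deg K0" unfolding L0_def using deg_shift[where A=L and i=j, OF j] Suc.prems dK0 by simp
  have KK: "(\<lambda>l. K0 l + ev i l) = K" using shift_iff[of K i K0] i unfolding K0_def by simp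
  have LL: "(\<lambda>l. L0 l + ev j l) = L" using shift_iff[of L j L0] j unfolding L0_def by simp
  have m0: "mono (K0, L0) \<in> I" using Suc.IH dK0 dL0 by simp
  have eB: "mono (ev i, ev j) \<in> Balg" by (rule mono_Balg) (simp add: deg_ev)
  have w: "wick h (mono (K0, L0)) (mono (ev i, ev j)) \<in> I" by (rule si_wickR[OF I eB m0])
  let ?c = "complex_of_real (h * real (L0 i))"
  let ?L' = "\<lambda>l. L0 l - ev i l + ev j l"
  have t2: "(\<lambda>m. ?c * mono (K0, ?L') m) \<in> I"
  proof (cases "1 \<le> L0 i")
    case True
    have d1: "deg ?L' = deg (\<lambda>l. L0 l - ev i l) + deg (ev j)" by (rule deg_add)
    have d2: "deg (\<lambda>l. L0 l - ev i l) = deg L0 - 1" by (rule deg_shift[where A=L0 and i=i, OF True])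
    have d3: "1 \<le> deg L0" using deg_mono[OF ev_le[where A=L0 and i=i, OF True]] by (simp add: deg_ev)
    have "deg ?L' = deg L0" using d1 d2 d3 by (simp add: deg_ev)
    then have "mono (K0, ?L') \<in> I" using Suc.IH dK0 dL0 by simp
    then show ?thesis by (rule si_scale[OF I])
  next
    case False
    then have "L0 i = 0" by simp
    then have "(\<lambda>m. ?c * mono (K0, ?L') m) = (\<lambda>_. 0)" by simp
    then show ?thesis using si_zero[OF I] by simp
  qed
  have eq: "mono (K, L) = (\<lambda>m. wick h (mono (K0, L0)) (mono (ev i, ev j)) m + (-1) * (?c * mono (K0, ?L') m))"
    unfolding wick_mono_ev KK LL by simp
  have mem: "(\<lambda>m. wick h (mono (K0, L0)) (mono (ev i, ev j)) m + (-1) * (?c * mono (K0, ?L') m)) \<in> I"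
    by (rule si_add[OF I w si_scale[OF I t2]])
  show ?case by (subst eq) (rule mem)
qed

lemma kills_vec:
  assumes f: "fin f" and kf: "kills h k f" and v: "fin v" and dv: "degk k v"
  shows "pi_rep h f v = (\<lambda>_. 0)"
proof (rule ext)
  fix A
  have "pi_rep h f v A = (\<Sum>p\<in>csupp f. \<Sum>N\<in>csupp v. f p * v N * pk h (fst p) (snd p) N A)"
    by (simp add: pi_rep_eq[OF f order_refl v order_refl] split_def)
  also have "\<dots> = (\<Sum>N\<in>csupp v. v N * pi_rep h f (delta N) A)"
    by (subst sum.swap) (simp add: pi_delta[OF f] sum_distrib_left mult_ac)
  also have "\<dots> = 0"
  proof (intro sum.neutral ballI)
    fix N assume "N \<in> csupp v"
    then have "deg N = k" using dv by (auto simp: degk_def csupp_def)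
    then show "v N * pi_rep h f (delta N) A = 0" using kf by (simp add: kills_def)
  qed
  finally show "pi_rep h f v A = 0" .
qed

lemma K1_ideal:
  assumes h: "0 < h"
  shows "is_star_ideal h {f \<in> Balg. kills h k f}"
  unfolding is_star_ideal_def
proof (intro conjI ballI allI)
  show "{f \<in> Balg. kills h k f} \<subseteq> Balg" by blast
  show "(\<lambda>_. 0) \<in> {f \<in> Balg. kills h k f}" by (simp add: Balg_zero kills_zero)
next
  fix f g :: "'a cpoly" assume "f \<in> {f \<in> Balg. kills h k f}" "g \<in> {f \<in> Balg. kills h k f}"
  then show "(\<lambda>m. f m + g m) \<in> {f \<in> Balg. kills h k f}"
    by (auto intro: Balg_add kills_add Balg_fin)
next
  fix c and f :: "'a cpoly" assume "f \<in> {f \<in> Balg. kills h k f}"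
  then show "(\<lambda>m. c * f m) \<in> {f \<in> Balg. kills h k f}"
    by (auto intro: Balg_scale kills_scale Balg_fin)
next
  fix a f :: "'a cpoly" assume a: "a \<in> Balg" and f: "f \<in> {f \<in> Balg. kills h k f}"
  then have fB: "f \<in> Balg" and kf: "kills h k f" by auto
  have "kills h k (wick h a f)"
    unfolding kills_def
  proof (intro allI impI)
    fix N :: "'a \<Rightarrow> nat" assume N: "deg N = k"
    have "pi_rep h f (delta N) = (\<lambda>_. 0)" using kf N by (simp add: kills_def)
    then show "pi_rep h (wick h a f) (delta N) = (\<lambda>_. 0)"
      by (simp add: pi_wick[OF Balg_fin[OF a] Balg_fin[OF fB] fin_delta] pi_zero_vec)
  qed
  moreover have "kills h k (wick h f a)"
    unfolding kills_def
  proof (intro allI impI)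
    fix N :: "'a \<Rightarrow> nat" assume N: "deg N = k"
    have "pi_rep h f (pi_rep h a (delta N)) = (\<lambda>_. 0)"
      by (rule kills_vec[OF Balg_fin[OF fB] kf fin_pi_rep[OF Balg_fin[OF a] fin_delta] pi_Balg_deg[OF a degk_delta[OF N]]])
    then show "pi_rep h (wick h f a) (delta N) = (\<lambda>_. 0)"
      by (simp add: pi_wick[OF Balg_fin[OF fB] Balg_fin[OF a] fin_delta])
  qed
  ultimately show "wick h a f \<in> {f \<in> Balg. kills h k f}" "wick h f a \<in> {f \<in> Balg. kills h k f}"
    using a fB by (auto intro: Balg_wick)
next
  fix f :: "'a cpoly" assume f: "f \<in> {f \<in> Balg. kills h k f}"
  then have fB: "f \<in> Balg" and kf: "kills h k f" by auto
  have "kills h k (cstar f)"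
    unfolding kills_def
  proof (intro allI impI ext)
    fix N A :: "'a \<Rightarrow> nat" assume N: "deg N = k"
    show "pi_rep h (cstar f) (delta N) A = 0"
    proof (cases "deg A = k")
      case True
      have "fock_inner h (delta A) (pi_rep h (cstar f) (delta N)) = fock_inner h (pi_rep h f (delta A)) (delta N)"
        using fock_pi_adj[OF fin_cstar[OF Balg_fin[OF fB]] fin_delta fin_delta] by (simp add: cstar_cstar)
      also have "\<dots> = 0" using kf True by (simp add: kills_def fock_zero1)
      finally show ?thesis unfolding fock_delta using fw_nz[OF h, of A] by simp
    next
      case False
      then show ?thesis using pi_Balg_deg[OF Balg_cstar[OF fB] degk_delta[OF N], of h] unfolding degk_def by auto
    qed
  qed
  then show "cstar f \<in> {f \<in> Balg. kills h k f}" using fB by (auto intro: Balg_cstar)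
qed

lemma K1_contains:
  "insert (Jc (complex_of_real (h * real k)) :: 'a::finite cpoly) (Pkl (Suc k) (Suc k)) \<subseteq> {f \<in> Balg. kills h k f}"
proof
  fix f :: "'a cpoly" assume "f \<in> insert (Jc (complex_of_real (h * real k))) (Pkl (Suc k) (Suc k))"
  then show "f \<in> {f \<in> Balg. kills h k f}"
  proof
    assume fe: "f = Jc (complex_of_real (h * real k))"
    have "Jc (complex_of_real (h * real k)) \<in> Balg \<and> kills h k (Jc (complex_of_real (h * real k)))"
      using Jc_Balg kills_Jc by blast
    then show ?thesis unfolding fe by blast
  next
    assume P: "f \<in> Pkl (Suc k) (Suc k)"
    have ff: "fin f" using P by (simp add: Pkl_def)
    have "kills h k f"
      unfolding kills_def
    proof (intro allI impI ext)
      fix N A :: "'a \<Rightarrow> nat" assume N: "deg N = k"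
      show "pi_rep h f (delta N) A = 0"
        unfolding pi_delta[OF ff]
      proof (intro sum.neutral ballI)
        fix p assume p: "p \<in> csupp f"
        have "deg (snd p) = Suc k" using P p by (auto simp: Pkl_def)
        then have "\<not> snd p \<le> N" using deg_mono[of "snd p" N] N by auto
        then show "f p * pk h (fst p) (snd p) N A = 0" by (simp add: pk_def)
      qed
    qed
    then show ?thesis using Pkl_Balg[OF P] by simp
  qed
qed

lemma Q0_iff:
  fixes y :: "'a::finite cpoly"
  assumes R: "R = {f \<in> Balg. cstar f = f \<and> (\<forall>\<omega>. relevant h k \<omega> \<longrightarrow> Im (\<omega> f) = 0 \<and> 0 \<le> Re (\<omega> f))}"
  shows "y \<in> R \<inter> (\<lambda>f m. - f m) ` R \<longleftrightarrow> y \<in> Balg \<and> cstar y = y \<and> (\<forall>\<omega>. relevant h k \<omega> \<longrightarrow> \<omega> y = 0)"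
proof
  assume y: "y \<in> R \<inter> (\<lambda>f m. - f m) ` R"
  then obtain y' where y': "y' \<in> R" "y = (\<lambda>m. - y' m)" by auto
  have "\<omega> y = 0" if r: "relevant h k \<omega>" for \<omega>
  proof -
    have st: "is_state h \<omega>" using r by (simp add: relevant_def)
    have a: "Im (\<omega> y) = 0" "0 \<le> Re (\<omega> y)" using y r R by auto
    have b: "Im (\<omega> y') = 0" "0 \<le> Re (\<omega> y')" using y' r R by auto
    have "\<omega> y = - \<omega> y'" using st_scale[of h \<omega> y' "-1"] st y' R by simp
    then show ?thesis using a b by (simp add: complex_eq_iff)
  qed
  then show "y \<in> Balg \<and> cstar y = y \<and> (\<forall>\<omega>. relevant h k \<omega> \<longrightarrow> \<omega> y = 0)" using y R by auto
next
  assume y: "y \<in> Balg \<and> cstar y = y \<and> (\<forall>\<omega>. relevant h k \<omega> \<longrightarrow> \<omega> y = 0)"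
  have "\<forall>\<omega>. relevant h k \<omega> \<longrightarrow> Im (\<omega> y) = 0 \<and> 0 \<le> Re (\<omega> y)"
  proof (intro allI impI)
    fix \<omega> :: "'a cpoly \<Rightarrow> complex" assume "relevant h k \<omega>"
    then have "\<omega> y = 0" using y by blast
    then show "Im (\<omega> y) = 0 \<and> 0 \<le> Re (\<omega> y)" by simp
  qed
  then have yR: "y \<in> R" using R y by blast
  have "(\<lambda>m. - y m) \<in> R"
  proof -
    have B: "(\<lambda>m. - y m) \<in> Balg" using Balg_scale[of y "-1"] y by simp
    have H: "cstar (\<lambda>m. - y m) = (\<lambda>m. - y m)" using y cstar_scale[of "-1" y] by simp
    have "\<omega> (\<lambda>m. - y m) = 0" if r: "relevant h k \<omega>" for \<omega>
    proof -
      have st: "is_state h \<omega>" using r by (simp add: relevant_def)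
      show ?thesis using st_scale[of h \<omega> y "-1"] st y r by simp
    qed
    moreover have "\<forall>\<omega>. relevant h k \<omega> \<longrightarrow> Im (\<omega> (\<lambda>m. - y m)) = 0 \<and> 0 \<le> Re (\<omega> (\<lambda>m. - y m))"
    proof (intro allI impI)
      fix \<omega> :: "'a cpoly \<Rightarrow> complex" assume "relevant h k \<omega>"
      with calculation have "\<omega> (\<lambda>m. - y m) = 0" by blast
      then show "Im (\<omega> (\<lambda>m. - y m)) = 0 \<and> 0 \<le> Re (\<omega> (\<lambda>m. - y m))" by simp
    qed
    ultimately show ?thesis using B H R by blast
  qed
  then have "y \<in> (\<lambda>f m. - f m) ` R" by (rule image_eqI[rotated]) simp
  then show "y \<in> R \<inter> (\<lambda>f m. - f m) ` R" using yR by (rule IntI[rotated])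
qed

theorem proposition4p10:
  fixes n k :: nat and h :: real
  assumes "1 \<le> n" and "card (UNIV :: 'i set) = Suc n" and "0 < h"
  shows "supp_C (Rset h (h * real k) :: 'i::finite cpoly set) =
         gen_star_ideal h (insert (\<lambda>m. J_p m - complex_of_real (h * real k) * one_p m)
                                  (Pkl (Suc k) (Suc k)))"
proof -
  note h = \<open>0 < h\<close>
  let ?J = "Jc (complex_of_real (h * real k)) :: 'i cpoly"
  have Jeq: "(\<lambda>m. J_p m - complex_of_real (h * real k) * one_p m) = ?J" by (simp add: Jc_def)
  let ?R = "Rset h (h * real k) :: 'i cpoly set"
  have R: "?R = {f \<in> Balg. cstar f = f \<and> (\<forall>\<omega>. relevant h k \<omega> \<longrightarrow> Im (\<omega> f) = 0 \<and> 0 \<le> Re (\<omega> f))}"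
    unfolding Rset_def relevant_def Jeq ..
  define K0 where "K0 = {f :: 'i cpoly. f \<in> Balg \<and> (\<forall>\<omega>. relevant h k \<omega> \<longrightarrow> \<omega> f = (0::complex))}"
  let ?S = "insert ?J (Pkl (Suc k) (Suc k))"
  have A: "supp_C ?R = K0"
  proof
    show "supp_C ?R \<subseteq> K0"
    proof
      fix x assume "x \<in> supp_C ?R"
      then have "\<exists>a b. x = (\<lambda>m. a m + \<i> * b m) \<and> a \<in> ?R \<inter> (\<lambda>f m. - f m) ` ?R \<and> b \<in> ?R \<inter> (\<lambda>f m. - f m) ` ?R"
        unfolding supp_C_def Let_def by (simp only: mem_Collect_eq)
      then obtain a b :: "'i cpoly" where x: "x = (\<lambda>m. a m + \<i> * b m)" and a: "a \<in> ?R \<inter> (\<lambda>f m. - f m) ` ?R"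
        and b: "b \<in> ?R \<inter> (\<lambda>f m. - f m) ` ?R"
        by (elim exE conjE)
      have a': "a \<in> Balg \<and> cstar a = a \<and> (\<forall>\<omega>. relevant h k \<omega> \<longrightarrow> \<omega> a = 0)" using a Q0_iff[OF R] by blast
      have b': "b \<in> Balg \<and> cstar b = b \<and> (\<forall>\<omega>. relevant h k \<omega> \<longrightarrow> \<omega> b = 0)" using b Q0_iff[OF R] by blast
      have "x \<in> Balg" unfolding x using a' b' by (intro Balg_add Balg_scale) auto
      moreover have "\<omega> x = 0" if r: "relevant h k \<omega>" for \<omega>
      proof -
        have st: "is_state h \<omega>" using r by (simp add: relevant_def)
        have "\<omega> x = \<omega> a + \<i> * \<omega> b"
          unfolding x using st_add[OF st _ Balg_scale] st_scale[OF st] a' b' by simp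
        moreover have "\<omega> a = 0" "\<omega> b = 0" using a' b' r by blast+
        ultimately show ?thesis by simp
      qed
      ultimately show "x \<in> K0" unfolding K0_def by blast
    qed
  next
    show "K0 \<subseteq> supp_C ?R"
    proof
      fix x assume xK: "x \<in> K0"
      then have xB: "x \<in> Balg" and xw: "\<And>\<omega>. relevant h k \<omega> \<Longrightarrow> \<omega> x = 0" unfolding K0_def by auto
      define a where "a = (\<lambda>m. (1/2) * (x m + cstar x m))"
      define b where "b = (\<lambda>m. (- \<i>/2) * (x m - cstar x m))"
      have aB: "a \<in> Balg" unfolding a_def by (intro Balg_scale Balg_add xB Balg_cstar)
      have bB: "b \<in> Balg" unfolding b_def by (intro Balg_scale Balg_diff xB Balg_cstar)
      have ah: "cstar a = a"
      proof (rule ext, clarify)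
        fix K L :: "'i \<Rightarrow> nat" show "cstar a (K, L) = a (K, L)"
          unfolding a_def by (simp add: cstar_def algebra_simps)
      qed
      have bh: "cstar b = b"
      proof (rule ext, clarify)
        fix K L :: "'i \<Rightarrow> nat" show "cstar b (K, L) = b (K, L)"
          unfolding b_def by (simp add: cstar_def algebra_simps)
      qed
      have xe: "x = (\<lambda>m. a m + \<i> * b m)"
        unfolding a_def b_def by (auto simp: fun_eq_iff algebra_simps)
      have xs0: "\<omega> (cstar x) = 0" if r: "relevant h k \<omega>" for \<omega>
        using st_cstar[of h \<omega> x] r xB xw[OF r] by (simp add: relevant_def)
      have wa: "\<omega> a = 0" if r: "relevant h k \<omega>" for \<omega>
      proof -
        have st: "is_state h \<omega>" using r by (simp add: relevant_def)
        have e1: "\<omega> (\<lambda>m. (1/2) * (x m + cstar x m)) = (1/2) * \<omega> (\<lambda>m. x m + cstar x m)"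
          by (rule st_scale[OF st Balg_add[OF xB Balg_cstar[OF xB]]])
        have e2: "\<omega> (\<lambda>m. x m + cstar x m) = \<omega> x + \<omega> (cstar x)"
          by (rule st_add[OF st xB Balg_cstar[OF xB]])
        show ?thesis unfolding a_def e1 e2 xw[OF r] xs0[OF r] by simp
      qed
      have wb: "\<omega> b = 0" if r: "relevant h k \<omega>" for \<omega>
      proof -
        have st: "is_state h \<omega>" using r by (simp add: relevant_def)
        have e1: "\<omega> (\<lambda>m. (- \<i>/2) * (x m - cstar x m)) = (- \<i>/2) * \<omega> (\<lambda>m. x m - cstar x m)"
          by (rule st_scale[OF st Balg_diff[OF xB Balg_cstar[OF xB]]])
        have e2: "\<omega> (\<lambda>m. x m - cstar x m) = \<omega> x - \<omega> (cstar x)"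
          by (rule st_diff[OF st xB Balg_cstar[OF xB]])
        show ?thesis unfolding b_def e1 e2 xw[OF r] xs0[OF r] by simp
      qed
      have aQ: "a \<in> ?R \<inter> (\<lambda>f m. - f m) ` ?R" using Q0_iff[OF R] aB ah wa by blast
      have bQ: "b \<in> ?R \<inter> (\<lambda>f m. - f m) ` ?R" using Q0_iff[OF R] bB bh wb by blast
      have "\<exists>a b. x = (\<lambda>m. a m + \<i> * b m) \<and> a \<in> ?R \<inter> (\<lambda>f m. - f m) ` ?R \<and> b \<in> ?R \<inter> (\<lambda>f m. - f m) ` ?R"
        by (rule exI[where x = a], rule exI[where x = b]) (intro conjI xe aQ bQ)
      then show "x \<in> supp_C ?R" unfolding supp_C_def Let_def by (simp only: mem_Collect_eq)
    qed
  qed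
  have B: "K0 = gen_star_ideal h ?S"
  proof
    show "K0 \<subseteq> gen_star_ideal h ?S"
    proof
      fix x assume xK: "x \<in> K0"
      then have xB: "x \<in> Balg" and xw: "\<And>\<omega>. relevant h k \<omega> \<Longrightarrow> \<omega> x = 0" unfolding K0_def by auto
      have kx: "kills h k x"
        by (rule kills_of_K0[OF h xB]) (simp add: xw relevant_def)
      show "x \<in> gen_star_ideal h ?S"
        unfolding gen_star_ideal_def
      proof (intro InterI, clarify)
        fix I assume I: "is_star_ideal h I" and SI: "?S \<subseteq> I"
        have JI: "?J \<in> I" using SI by simp
        have PI: "Pkl (Suc k) (Suc k) \<subseteq> I" using SI by simp
        show "x \<in> I"
        proof (rule reduction[OF h si_zero[OF I] si_add[OF I] si_scale[OF I] _ _ xB kx])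
          fix y :: "'i cpoly" assume "y \<in> Balg" then show "wick h y ?J \<in> I" by (rule si_wickL[OF I _ JI])
        next
          fix K L :: "'i \<Rightarrow> nat" assume kK: "k < deg K" and dKL: "deg K = deg L"
          from kK have d: "deg K = Suc k + (deg K - Suc k)" by simp
          from dKL have d2: "deg L = deg K" by simp
          show "mono (K, L) \<in> I" by (rule high_in_ideal[OF I PI d d2])
        qed
      qed
    qed
  next
    show "gen_star_ideal h ?S \<subseteq> K0"
    proof
      fix x assume "x \<in> gen_star_ideal h ?S"
      then have "x \<in> {f \<in> Balg. kills h k f}"
        unfolding gen_star_ideal_def using K1_ideal[OF h] K1_contains by blast
      then have xB: "x \<in> Balg" and kx: "kills h k x" by auto
      show "x \<in> K0"
      proof (rule reduction[OF h _ _ _ _ _ xB kx])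
        show "(\<lambda>_. 0) \<in> K0" unfolding K0_def by (auto simp: Balg_zero relevant_def st_zero)
      next
        fix f g :: "'i cpoly" assume "f \<in> K0" "g \<in> K0"
        then show "(\<lambda>m. f m + g m) \<in> K0" unfolding K0_def
          by (auto intro: Balg_add simp: relevant_def st_add)
      next
        fix c and f :: "'i cpoly" assume "f \<in> K0"
        then show "(\<lambda>m. c * f m) \<in> K0" unfolding K0_def
          by (auto intro: Balg_scale simp: relevant_def st_scale)
      next
        fix y :: "'i cpoly" assume y: "y \<in> Balg"
        show "wick h y ?J \<in> K0" unfolding K0_def
          using rel_wickJc[OF h _ y] Balg_wick[OF y Jc_Balg] by blast
      next
        fix K L :: "'i \<Rightarrow> nat" assume "k < deg K" "deg K = deg L"
        then show "mono (K, L) \<in> K0" unfolding K0_def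
          using rel_off[OF h] mono_Balg by blast
      qed
    qed
  qed
  show ?thesis unfolding Jeq A B ..
qed

end
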